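(* Let $\alpha>2$ and $V(x)=|x|^\alpha/\alpha$. There exists a constant $\tilde C_\alpha>0$ depending only on $\alpha$ such that for every integer $n\ge1$, $$\lambda_n(-L)\ \ge\ \tilde C_\alpha\, n^{2(\alpha-1)/\alpha}.$$
   Context: $V(x)=|x|^\alpha/\alpha$, $\mu$ the probability measure with density proportional to $e^{-V}$, $Lf=f''-V'f'$ self-adjoint in $L^2(\mu)$ (unique extension from $C_0^\infty(\mathbb R)$); its spectrum is discrete, and $\lambda_n(-L)$ is the $(n+1)$-th eigenvalue in increasing order ($\lambda_0(-L)=0$), equivalently the max-min value $\sup_{g_0,\dots,g_{n-1}\in L^2(\mu)}\inf_{f\in D(-L)\setminus\{0\},\,f\perp_\mu g_i}\frac{\int f(-Lf)\,d\mu}{\int f^2d\mu}$. *)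

theory Defs
  imports "HOL-Analysis.Analysis"
begin

definition V :: "real \<Rightarrow> real \<Rightarrow> real" where
  "V \<alpha> x = \<bar>x\<bar> powr \<alpha> / \<alpha>"

definition Zc :: "real \<Rightarrow> real" where
  "Zc \<alpha> = integral\<^sup>L lborel (\<lambda>x. exp (- V \<alpha> x))"

definition mu :: "real \<Rightarrow> real measure" where
  "mu \<alpha> = density lborel (\<lambda>x. ennreal (exp (- V \<alpha> x) / Zc \<alpha>))"

definition L2 :: "real \<Rightarrow> (real \<Rightarrow> real) set" where
  "L2 \<alpha> = {g. g \<in> borel_measurable borel \<and> integrable (mu \<alpha>) (\<lambda>x. (g x)^2)}"

text \<open>Graph of the self-adjoint operator L f = f'' - V' f' on its domain D(-L):
  the unique self-adjoint extension from C_0^infinity is the maximal operator, whose domain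
  consists of f in L^2(mu) with f, f' locally absolutely continuous and f'' - V' f' in L^2(mu).\<close>
definition graphL :: "real \<Rightarrow> ((real \<Rightarrow> real) \<times> (real \<Rightarrow> real)) set" where
  "graphL \<alpha> = {(f, h). \<exists>f1 f2.
      (\<forall>x. (f has_real_derivative f1 x) (at x)) \<and>
      f2 \<in> borel_measurable borel \<and>
      (\<forall>a b. a \<le> b \<longrightarrow> f2 absolutely_integrable_on {a..b} \<and>
                       (f2 has_integral (f1 b - f1 a)) {a..b}) \<and>
      (\<forall>x. h x = f2 x - deriv (V \<alpha>) x * f1 x) \<and>
      f \<in> L2 \<alpha> \<and> h \<in> L2 \<alpha>}"

text \<open>lambda_n(-L) via the max-min characterisation (extended reals to avoid junk values).\<close>
definition lambdaL :: "real \<Rightarrow> nat \<Rightarrow> ereal" where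
  "lambdaL \<alpha> n =
     (SUP g \<in> {g :: nat \<Rightarrow> real \<Rightarrow> real. \<forall>i<n. g i \<in> L2 \<alpha>}.
        INF fh \<in> {(f, h). (f, h) \<in> graphL \<alpha> \<and>
                         integral\<^sup>L (mu \<alpha>) (\<lambda>x. (f x)^2) \<noteq> 0 \<and>
                         (\<forall>i<n. integral\<^sup>L (mu \<alpha>) (\<lambda>x. f x * g i x) = 0)}.
          ereal (integral\<^sup>L (mu \<alpha>) (\<lambda>x. fst fh x * (- snd fh x))
                 / integral\<^sup>L (mu \<alpha>) (\<lambda>x. (fst fh x)^2)))"

end

theory Submission
  imports Defs "HOL-Real_Asymp.Real_Asymp"
begin


lemma telescope_bound:
  fixes H K :: "real \<Rightarrow> real"
  assumes ab: "a \<le> b" and d: "d > 0"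
    and loc: "\<And>x y. a \<le> x \<Longrightarrow> x \<le> y \<Longrightarrow> y \<le> b \<Longrightarrow> y - x < d \<Longrightarrow> \<bar>H y - H x\<bar> \<le> K y - K x"
  shows "\<bar>H b - H a\<bar> \<le> K b - K a"
proof -
  obtain N :: nat where N: "real N > (b - a) / d" using reals_Archimedean2 by blast
  have "(b - a) / d \<ge> 0" using ab d by simp
  hence Npos: "N > 0" using N by (cases N) auto
  define x where "x k = a + real k * (b - a) / real N" for k
  have x0: "x 0 = a" and xN: "x N = b" using Npos by (auto simp: x_def)
  have step: "x (Suc k) - x k < d" for k
  proof -
    have "x (Suc k) - x k = (b - a) / real N" using Npos by (simp add: x_def divide_simps) (simp add: algebra_simps)
    also have "\<dots> < d" using N Npos d ab by (simp add: field_simps mult.commute)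
    finally show ?thesis .
  qed
  have mono: "x k \<le> x (Suc k)" for k using ab Npos by (simp add: x_def field_simps)
  have inr: "k < N \<Longrightarrow> a \<le> x k \<and> x (Suc k) \<le> b" for k
  proof -
    assume k: "k < N"
    have "a \<le> x k" using ab Npos by (simp add: x_def)
    moreover have "real (Suc k) * (b - a) \<le> real N * (b - a)" using k ab
      by (intro mult_right_mono) auto
    hence "x (Suc k) \<le> b" using Npos by (simp add: x_def field_simps)
    ultimately show ?thesis by simp
  qed
  have "H b - H a = (\<Sum>k<N. H (x (Suc k)) - H (x k))"
    using sum_lessThan_telescope[of "\<lambda>k. H (x k)" N] x0 xN by simp
  hence "\<bar>H b - H a\<bar> \<le> (\<Sum>k<N. \<bar>H (x (Suc k)) - H (x k)\<bar>)" by (simp add: sum_abs)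
  also have "\<dots> \<le> (\<Sum>k<N. K (x (Suc k)) - K (x k))"
    by (intro sum_mono loc) (use inr mono step in auto)
  also have "\<dots> = K b - K a" using sum_lessThan_telescope[of "\<lambda>k. K (x k)" N] x0 xN by simp
  finally show ?thesis .
qed


lemma int_diff:
  fixes f :: "real \<Rightarrow> real"
  assumes "f integrable_on {a..b}" "a \<le> x" "x \<le> y" "y \<le> b"
  shows "(f has_integral (integral {a..y} f - integral {a..x} f)) {x..y}"
proof -
  have iy: "f integrable_on {a..y}" by (rule integrable_on_subinterval[OF assms(1)]) (use assms in auto)
  have ixy: "f integrable_on {x..y}" by (rule integrable_on_subinterval[OF assms(1)]) (use assms in auto)
  have "integral {a..x} f + integral {x..y} f = integral {a..y} f"
    using Henstock_Kurzweil_Integration.integral_combine[OF assms(2) assms(3) iy] .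
  thus ?thesis using ixy by (metis add_diff_cancel_left' has_integral_integral)
qed

lemma eps_zero:
  fixes z C :: real
  assumes "C \<ge> 0" "\<And>e. e > 0 \<Longrightarrow> \<bar>z\<bar> \<le> e * C"
  shows "z = 0"
proof (rule ccontr)
  assume z: "z \<noteq> 0"
  have "\<bar>z\<bar> \<le> (\<bar>z\<bar> / (C + 1)) * C" using assms(2)[of "\<bar>z\<bar> / (C + 1)"] z assms(1) by simp
  also have "\<dots> < \<bar>z\<bar>" using z assms(1) by (simp add: field_simps)
  finally show False by simp
qed

lemma ibp_ac:
  fixes \<phi> \<phi>' \<psi> g :: "real \<Rightarrow> real"
  assumes ab: "a \<le> b"
    and dphi: "\<And>x. x \<in> {a..b} \<Longrightarrow> (\<phi> has_real_derivative \<phi>' x) (at x)"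
    and cphi': "continuous_on {a..b} \<phi>'"
    and g: "g absolutely_integrable_on {a..b}"
    and psi: "\<And>x y. a \<le> x \<Longrightarrow> x \<le> y \<Longrightarrow> y \<le> b \<Longrightarrow> (g has_integral (\<psi> y - \<psi> x)) {x..y}"
  shows "((\<lambda>x. \<phi> x * g x + \<phi>' x * \<psi> x) has_integral (\<phi> b * \<psi> b - \<phi> a * \<psi> a)) {a..b}"
proof -
  have cphi: "continuous_on {a..b} \<phi>"
    using dphi by (meson DERIV_isCont continuous_at_imp_continuous_on)
  have gi: "g integrable_on {a..b}" using g by (simp add: absolutely_integrable_on_def)
  have agi: "(\<lambda>t. \<bar>g t\<bar>) integrable_on {a..b}" using g by (simp add: absolutely_integrable_on_def)
  have psieq: "\<psi> x = \<psi> a + integral {a..x} g" if "x \<in> {a..b}" for x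
    using psi[of a x] that by (auto dest: integral_unique)
  have cpsi: "continuous_on {a..b} \<psi>"
  proof -
    have "continuous_on {a..b} (\<lambda>x. \<psi> a + integral {a..x} g)"
      by (intro continuous_intros indefinite_integral_continuous_1 gi)
    thus ?thesis using psieq by (metis (no_types, lifting) continuous_on_cong)
  qed
  have bphi: "bounded (\<phi> ` {a..b})"
    by (intro compact_imp_bounded compact_continuous_image cphi) auto
  have i1: "(\<lambda>x. \<phi> x * g x) integrable_on {a..b}"
    using absolutely_integrable_bounded_measurable_product_real[OF
        continuous_imp_measurable_on_sets_lebesgue[OF cphi] _ bphi g]
    by (simp add: absolutely_integrable_on_def)
  have i2: "(\<lambda>x. \<phi>' x * \<psi> x) integrable_on {a..b}"
    by (intro integrable_continuous_real continuous_intros cphi' cpsi)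
  obtain M where M: "\<And>x. x \<in> {a..b} \<Longrightarrow> \<bar>\<phi>' x\<bar> \<le> M"
    using compact_imp_bounded[OF compact_continuous_image[OF cphi' compact_Icc]]
    unfolding bounded_iff by (metis atLeastAtMost_iff imageI real_norm_def)
  have M0: "M \<ge> 0" using M[of a] ab by auto
  define I1 where "I1 x = integral {a..x} (\<lambda>t. \<phi> t * g t)" for x
  define I2 where "I2 x = integral {a..x} (\<lambda>t. \<phi>' t * \<psi> t)" for x
  define G where "G x = integral {a..x} (\<lambda>t. \<bar>g t\<bar>)" for x
  define Hf where "Hf x = \<phi> x * \<psi> x - I1 x - I2 x" for x
  have Gmono: "G a \<le> G b" using agi by (simp add: G_def integral_nonneg)
  have key: "\<bar>Hf b - Hf a\<bar> \<le> e * ((G b - G a) + M * (b - a))" if e: "e > 0" for e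
  proof -
    have uphi: "uniformly_continuous_on {a..b} \<phi>" by (rule compact_uniformly_continuous[OF cphi]) auto
    have upsi: "uniformly_continuous_on {a..b} \<psi>" by (rule compact_uniformly_continuous[OF cpsi]) auto
    obtain d1 where d1: "d1 > 0" "\<And>x x'. x \<in> {a..b} \<Longrightarrow> x' \<in> {a..b} \<Longrightarrow> dist x' x < d1 \<Longrightarrow> dist (\<phi> x') (\<phi> x) < e"
      using uphi e unfolding uniformly_continuous_on_def by metis
    obtain d2 where d2: "d2 > 0" "\<And>x x'. x \<in> {a..b} \<Longrightarrow> x' \<in> {a..b} \<Longrightarrow> dist x' x < d2 \<Longrightarrow> dist (\<psi> x') (\<psi> x) < e"
      using upsi e unfolding uniformly_continuous_on_def by metis
    have loc: "\<bar>Hf y - Hf x\<bar> \<le> (e * G y + e * M * y) - (e * G x + e * M * x)"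
      if xy: "a \<le> x" "x \<le> y" "y \<le> b" "y - x < min d1 d2" for x y
    proof -
      have A: "(g has_integral (\<psi> y - \<psi> x)) {x..y}" using psi xy by auto
      have B: "(\<phi>' has_integral (\<phi> y - \<phi> x)) {x..y}"
        using xy dphi by (intro fundamental_theorem_of_calculus)
          (auto intro!: has_vector_derivative_at_within simp: has_real_derivative_iff_has_vector_derivative[symmetric] intro: has_field_derivative_at_within)
      have C: "((\<lambda>t. \<phi> t * g t) has_integral (I1 y - I1 x)) {x..y}"
        unfolding I1_def by (rule int_diff[OF i1]) (use xy in auto)
      have D: "((\<lambda>t. \<phi>' t * \<psi> t) has_integral (I2 y - I2 x)) {x..y}"
        unfolding I2_def by (rule int_diff[OF i2]) (use xy in auto)
      have E: "((\<lambda>t. (\<phi> y - \<phi> t) * g t + (\<psi> x - \<psi> t) * \<phi>' t) has_integral (Hf y - Hf x)) {x..y}"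
      proof -
        have "((\<lambda>t. (\<phi> y * g t - \<phi> t * g t) + (\<psi> x * \<phi>' t - \<phi>' t * \<psi> t)) has_integral
               ((\<phi> y * (\<psi> y - \<psi> x) - (I1 y - I1 x)) + (\<psi> x * (\<phi> y - \<phi> x) - (I2 y - I2 x)))) {x..y}"
          by (intro has_integral_add has_integral_diff has_integral_mult_right A B C D)
        moreover have "(\<phi> y * (\<psi> y - \<psi> x) - (I1 y - I1 x)) + (\<psi> x * (\<phi> y - \<phi> x) - (I2 y - I2 x)) = Hf y - Hf x"
          by (simp add: Hf_def algebra_simps)
        ultimately have "((\<lambda>t. (\<phi> y * g t - \<phi> t * g t) + (\<psi> x * \<phi>' t - \<phi>' t * \<psi> t)) has_integral (Hf y - Hf x)) {x..y}" by simp
        moreover have "(\<lambda>t. (\<phi> y * g t - \<phi> t * g t) + (\<psi> x * \<phi>' t - \<phi>' t * \<psi> t)) = (\<lambda>t. (\<phi> y - \<phi> t) * g t + (\<psi> x - \<psi> t) * \<phi>' t)"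
          by (simp add: fun_eq_iff algebra_simps)
        ultimately show ?thesis by simp
      qed
      have F: "((\<lambda>t. e * \<bar>g t\<bar> + e * M) has_integral ((e * G y + e * M * y) - (e * G x + e * M * x))) {x..y}"
      proof -
        have "((\<lambda>t. e * \<bar>g t\<bar> + e * M) has_integral (e * (G y - G x) + e * M * (y - x))) {x..y}"
          using xy by (intro has_integral_add has_integral_mult_right int_diff[OF agi, of x y, folded G_def])
            (use has_integral_const_real[of "e*M" x y] in \<open>auto simp: mult.commute\<close>)
        thus ?thesis by (simp add: algebra_simps)
      qed
      have bnd: "\<bar>(\<phi> y - \<phi> t) * g t + (\<psi> x - \<psi> t) * \<phi>' t\<bar> \<le> e * \<bar>g t\<bar> + e * M" if t: "t \<in> {x..y}" for t
      proof -
        have t': "t \<in> {a..b}" "x \<in> {a..b}" "y \<in> {a..b}" using t xy by auto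
        have "\<bar>\<phi> y - \<phi> t\<bar> \<le> e" using d1(2)[of t y] t' xy t by (auto simp: dist_real_def)
        moreover have "\<bar>\<psi> x - \<psi> t\<bar> \<le> e" using d2(2)[of t x] t' xy t by (auto simp: dist_real_def abs_minus_commute)
        ultimately have "\<bar>(\<phi> y - \<phi> t) * g t\<bar> \<le> e * \<bar>g t\<bar>" "\<bar>(\<psi> x - \<psi> t) * \<phi>' t\<bar> \<le> e * M"
          using M[OF t'(1)] by (auto simp: abs_mult intro: mult_mono)
        thus ?thesis by linarith
      qed
      show ?thesis using has_integral_le[OF E F] integral_norm_bound_integral has_integral_integrable[OF E] has_integral_integrable[OF F] bnd
        by (metis (no_types, lifting) E F integral_unique real_norm_def)
    qed
    have "\<bar>Hf b - Hf a\<bar> \<le> (e * G b + e * M * b) - (e * G a + e * M * a)"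
      using telescope_bound[OF ab _ loc, of "min d1 d2"] d1 d2 by auto
    thus ?thesis by (simp add: algebra_simps)
  qed
  have "Hf b - Hf a = 0"
    by (rule eps_zero[of "(G b - G a) + M * (b - a)"]) (use key Gmono M0 ab in auto)
  hence "I1 b + I2 b = \<phi> b * \<psi> b - \<phi> a * \<psi> a" by (simp add: Hf_def I1_def I2_def)
  moreover have "((\<lambda>x. \<phi> x * g x + \<phi>' x * \<psi> x) has_integral (I1 b + I2 b)) {a..b}"
    unfolding I1_def I2_def using i1 i2 by (intro has_integral_add) (auto simp: has_integral_integral)
  ultimately show ?thesis by simp
qed


lemma deriv0_bound:
  fixes p :: "real \<Rightarrow> real"
  assumes b: "\<beta> > 1" and p0: "p 0 = 0" and pb: "\<And>y. \<bar>p y\<bar> \<le> \<bar>y\<bar> powr \<beta>"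
  shows "(p has_real_derivative 0) (at 0)"
proof -
  have lim: "((\<lambda>y. \<bar>y\<bar> powr (\<beta> - 1)) \<longlongrightarrow> 0) (at (0::real))"
    by (rule tendsto_zero_powrI) (use b in \<open>auto intro!: tendsto_eq_intros\<close>)
  have "((\<lambda>y. (p y - p 0) / (y - 0)) \<longlongrightarrow> 0) (at 0)"
  proof (rule Lim_null_comparison[OF _ lim])
    show "\<forall>\<^sub>F y in at 0. norm ((p y - p 0) / (y - 0)) \<le> \<bar>y\<bar> powr (\<beta> - 1)"
    proof (rule eventually_at_topological[THEN iffD2], intro exI[of _ UNIV] conjI ballI impI, simp, simp)
      fix y :: real assume "y \<noteq> 0"
      hence "\<bar>p y\<bar> / \<bar>y\<bar> \<le> \<bar>y\<bar> powr \<beta> / \<bar>y\<bar>" using pb[of y] by (simp add: divide_right_mono)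
      also have "\<dots> = \<bar>y\<bar> powr (\<beta> - 1)" using \<open>y \<noteq> 0\<close> by (simp add: powr_diff)
      finally show "norm ((p y - p 0) / (y - 0)) \<le> \<bar>y\<bar> powr (\<beta> - 1)" using p0 by (simp add: abs_divide)
    qed
  qed
  thus ?thesis by (simp add: has_field_derivative_iff)
qed

lemma d_abs_powr:
  fixes \<beta> x :: real
  assumes b: "\<beta> > 1"
  shows "((\<lambda>y. \<bar>y\<bar> powr \<beta>) has_real_derivative (\<beta> * sgn x * \<bar>x\<bar> powr (\<beta> - 1))) (at x)"
proof (cases "x = 0")
  case True
  thus ?thesis using deriv0_bound[OF b, of "\<lambda>y. \<bar>y\<bar> powr \<beta>"] by simp
next
  case False
  show ?thesis
  proof (cases "x > 0")
    case True
    have "((\<lambda>y. y powr \<beta>) has_real_derivative (\<beta> * x powr (\<beta> - 1))) (at x)"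
      using has_real_derivative_powr[OF True] .
    hence "((\<lambda>y. y powr \<beta>) has_real_derivative (\<beta> * sgn x * \<bar>x\<bar> powr (\<beta> - 1))) (at x)" using True by simp
    thus ?thesis
      by (rule has_field_derivative_transform_within_open[of _ _ _ "{0<..}"]) (use True in auto)
  next
    case False
    hence xn: "x < 0" using \<open>x \<noteq> 0\<close> by simp
    have "((\<lambda>y. (- y) powr \<beta>) has_real_derivative (\<beta> * (-x) powr (\<beta> - 1) * (-1))) (at x)"
      using xn by (auto intro!: derivative_eq_intros)
    hence "((\<lambda>y. (- y) powr \<beta>) has_real_derivative (\<beta> * sgn x * \<bar>x\<bar> powr (\<beta> - 1))) (at x)"
      using xn by simp
    thus ?thesis
      by (rule has_field_derivative_transform_within_open[of _ _ _ "{..<0}"]) (use xn in auto)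
  qed
qed

lemma d_sgn_powr:
  fixes \<beta> x :: real
  assumes b: "\<beta> > 1"
  shows "((\<lambda>y. sgn y * \<bar>y\<bar> powr \<beta>) has_real_derivative (\<beta> * \<bar>x\<bar> powr (\<beta> - 1))) (at x)"
proof (cases "x = 0")
  case True
  thus ?thesis using deriv0_bound[OF b, of "\<lambda>y. sgn y * \<bar>y\<bar> powr \<beta>"] b
    by (simp add: abs_mult abs_sgn_eq)
next
  case False
  show ?thesis
  proof (cases "x > 0")
    case True
    have "((\<lambda>y. y powr \<beta>) has_real_derivative (\<beta> * x powr (\<beta> - 1))) (at x)"
      using has_real_derivative_powr[OF True] .
    hence "((\<lambda>y. y powr \<beta>) has_real_derivative (\<beta> * \<bar>x\<bar> powr (\<beta> - 1))) (at x)" using True by simp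
    thus ?thesis
      by (rule has_field_derivative_transform_within_open[of _ _ _ "{0<..}"]) (use True in auto)
  next
    case False
    hence xn: "x < 0" using \<open>x \<noteq> 0\<close> by simp
    have "((\<lambda>y. - ((- y) powr \<beta>)) has_real_derivative - (\<beta> * (-x) powr (\<beta> - 1) * (-1))) (at x)"
      using xn by (auto intro!: derivative_eq_intros)
    hence "((\<lambda>y. - ((- y) powr \<beta>)) has_real_derivative (\<beta> * \<bar>x\<bar> powr (\<beta> - 1))) (at x)"
      using xn by simp
    thus ?thesis
      by (rule has_field_derivative_transform_within_open[of _ _ _ "{..<0}"]) (use xn in auto)
  qed
qed


definition dV :: "real \<Rightarrow> real \<Rightarrow> real" where "dV a x = sgn x * \<bar>x\<bar> powr (a - 1)"
definition ddV :: "real \<Rightarrow> real \<Rightarrow> real" where "ddV a x = (a - 1) * \<bar>x\<bar> powr (a - 2)"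
definition rho :: "real \<Rightarrow> real \<Rightarrow> real" where "rho a x = exp (- V a x)"

lemma V_has_deriv: "a > 1 \<Longrightarrow> (V a has_real_derivative dV a x) (at x)"
proof -
  assume a: "a > 1"
  have "((\<lambda>y. \<bar>y\<bar> powr a / a) has_real_derivative (a * sgn x * \<bar>x\<bar> powr (a - 1)) / a) (at x)"
    by (intro DERIV_cdivide d_abs_powr a)
  moreover have "V a = (\<lambda>y. \<bar>y\<bar> powr a / a)" by (simp add: fun_eq_iff V_def)
  ultimately show ?thesis using a by (simp add: dV_def)
qed

lemma deriv_V: "a > 1 \<Longrightarrow> deriv (V a) x = dV a x"
  by (rule DERIV_imp_deriv[OF V_has_deriv])

lemma dV_has_deriv: "a > 2 \<Longrightarrow> (dV a has_real_derivative ddV a x) (at x)"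
proof -
  assume a: "a > 2"
  have "((\<lambda>y. sgn y * \<bar>y\<bar> powr (a - 1)) has_real_derivative ((a - 1) * \<bar>x\<bar> powr (a - 1 - 1))) (at x)"
    by (rule d_sgn_powr) (use a in simp)
  thus ?thesis by (simp add: dV_def[abs_def] ddV_def)
qed

lemma rho_has_deriv: "a > 1 \<Longrightarrow> (rho a has_real_derivative (- dV a x * rho a x)) (at x)"
proof -
  assume a: "a > 1"
  have "((\<lambda>y. exp (- V a y)) has_real_derivative (exp (- V a x) * (- dV a x))) (at x)"
    by (intro DERIV_chain2[OF DERIV_exp] DERIV_minus V_has_deriv a)
  thus ?thesis by (simp add: rho_def[abs_def] mult.commute)
qed

lemma V_nonneg: "a > 0 \<Longrightarrow> V a x \<ge> 0" by (simp add: V_def)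
lemma rho_pos: "rho a x > 0" by (simp add: rho_def)
lemma rho_le1: "a > 0 \<Longrightarrow> rho a x \<le> 1" by (simp add: rho_def V_def)
lemma rho_even: "rho a (- x) = rho a x" by (simp add: rho_def V_def)
lemma V_mono: "a > 0 \<Longrightarrow> \<bar>x\<bar> \<le> \<bar>y\<bar> \<Longrightarrow> V a x \<le> V a y"
  by (simp add: V_def divide_right_mono powr_mono2)
lemma rho_mono: "a > 0 \<Longrightarrow> \<bar>x\<bar> \<le> \<bar>y\<bar> \<Longrightarrow> rho a y \<le> rho a x"
  using V_mono[of a x y] by (simp add: rho_def)

lemma cont_rho: "a > 1 \<Longrightarrow> continuous_on S (rho a)"
  by (meson DERIV_isCont rho_has_deriv continuous_at_imp_continuous_on)
lemma cont_dV: "a > 2 \<Longrightarrow> continuous_on S (dV a)"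
  by (meson DERIV_isCont dV_has_deriv continuous_at_imp_continuous_on)
lemma cont_ddV: "a > 2 \<Longrightarrow> continuous_on S (ddV a)"
proof -
  assume a: "a > 2"
  have ic: "isCont (\<lambda>x. \<bar>x\<bar> powr (a - 2)) x" for x :: real
    unfolding isCont_def by (rule tendsto_eq_intros) (use a in \<open>auto intro!: tendsto_eq_intros\<close>)
  have "isCont (ddV a) x" for x unfolding ddV_def by (rule continuous_mult[OF continuous_const ic])
  thus ?thesis by (simp add: continuous_at_imp_continuous_on)
qed

lemma abs_dV: "\<bar>dV a x\<bar> = \<bar>x\<bar> powr (a - 1)"
  by (cases "x = 0") (auto simp: dV_def abs_mult)
lemma dV_sq: "(dV a x)^2 = \<bar>x\<bar> powr (2 * a - 2)"
proof -
  have "(dV a x)^2 = \<bar>dV a x\<bar>^2" by simp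
  also have "\<dots> = (\<bar>x\<bar> powr (a - 1))^2" by (simp add: abs_dV)
  also have "\<dots> = \<bar>x\<bar> powr (2 * a - 2)"
    by (simp add: power2_eq_square powr_add[symmetric])
  finally show ?thesis .
qed
lemma dV_sign: "x \<ge> 0 \<Longrightarrow> dV a x \<ge> 0" "x \<le> 0 \<Longrightarrow> dV a x \<le> 0"
  by (auto simp: dV_def sgn_if)


definition W :: "real \<Rightarrow> real \<Rightarrow> real" where "W a t = (dV a t)^2 / 4 - ddV a t / 2"

lemma cont_W: "a > 2 \<Longrightarrow> continuous_on S (W a)"
  unfolding W_def[abs_def] by (intro continuous_intros cont_dV cont_ddV) auto

lemma W_lemma:
  fixes f f1 :: "real \<Rightarrow> real"
  assumes a2: "\<alpha> > 2" and df: "\<And>x. (f has_real_derivative f1 x) (at x)"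
    and cf1: "continuous_on UNIV f1" and ab: "a \<le> 0" "0 \<le> b"
  shows "integral {a..b} (\<lambda>t. f t^2 * W \<alpha> t * rho \<alpha> t) \<le> integral {a..b} (\<lambda>t. f1 t^2 * rho \<alpha> t)"
proof -
  have a1: "\<alpha> > 1" using a2 by simp
  have cf: "continuous_on UNIV f" using df by (meson DERIV_isCont continuous_at_imp_continuous_on)
  have cfS: "continuous_on S f" "continuous_on S f1" for S
    using continuous_on_subset[OF cf subset_UNIV] continuous_on_subset[OF cf1 subset_UNIV] by auto
  note cont = cfS cont_rho[OF a1] cont_dV[OF a2] cont_ddV[OF a2] cont_W[OF a2]
  define P where "P t = f t^2 * dV \<alpha> t * rho \<alpha> t" for t
  define P' where "P' t = 2 * f t * f1 t * dV \<alpha> t * rho \<alpha> t + f t^2 * ddV \<alpha> t * rho \<alpha> t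
      + f t^2 * dV \<alpha> t * (- dV \<alpha> t * rho \<alpha> t)" for t
  have dP: "(P has_real_derivative P' t) (at t)" for t
  proof -
    have "P = (\<lambda>t. f t * f t * dV \<alpha> t * rho \<alpha> t)" by (simp add: P_def fun_eq_iff power2_eq_square)
    moreover have "((\<lambda>t. f t * f t * dV \<alpha> t * rho \<alpha> t) has_real_derivative P' t) (at t)"
      by (rule DERIV_cong[OF DERIV_mult[OF DERIV_mult[OF DERIV_mult[OF df df] dV_has_deriv[OF a2]] rho_has_deriv[OF a1]]])
         (simp add: P'_def power2_eq_square algebra_simps)
    ultimately show ?thesis by simp
  qed
  have ab': "a \<le> b" using ab by simp
  have FP: "(P' has_integral (P b - P a)) {a..b}"
    by (intro fundamental_theorem_of_calculus ab')
       (auto simp: has_real_derivative_iff_has_vector_derivative[symmetric] intro: has_field_derivative_at_within dP)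
  define S where "S t = (f1 t - f t * dV \<alpha> t / 2)^2 * rho \<alpha> t" for t
  have iS: "(S has_integral integral {a..b} S) {a..b}"
    unfolding S_def by (intro integrable_integral integrable_continuous_real continuous_intros cont) auto
  have S0: "integral {a..b} S \<ge> 0"
    by (rule has_integral_nonneg[OF iS]) (auto simp: S_def intro!: mult_nonneg_nonneg less_imp_le[OF rho_pos])
  have iW: "((\<lambda>t. f t^2 * W \<alpha> t * rho \<alpha> t) has_integral integral {a..b} (\<lambda>t. f t^2 * W \<alpha> t * rho \<alpha> t)) {a..b}"
    by (intro integrable_integral integrable_continuous_real continuous_intros cont)
  have "((\<lambda>t. f t^2 * W \<alpha> t * rho \<alpha> t + (S t + P' t / 2)) has_integral
         (integral {a..b} (\<lambda>t. f t^2 * W \<alpha> t * rho \<alpha> t) + (integral {a..b} S + (P b - P a) / 2))) {a..b}"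
    by (intro has_integral_add iW iS has_integral_divide FP)
  moreover have "(\<lambda>t. f t^2 * W \<alpha> t * rho \<alpha> t + (S t + P' t / 2)) = (\<lambda>t. f1 t^2 * rho \<alpha> t)"
    by (simp add: fun_eq_iff S_def P'_def W_def power2_eq_square field_simps)
  ultimately have eq: "integral {a..b} (\<lambda>t. f1 t^2 * rho \<alpha> t) =
      integral {a..b} (\<lambda>t. f t^2 * W \<alpha> t * rho \<alpha> t) + (integral {a..b} S + (P b - P a) / 2)"
    by (simp add: integral_unique)
  have "P b \<ge> 0" unfolding P_def using dV_sign(1)[OF ab(2)] rho_pos[of \<alpha> b] by simp
  moreover have "P a \<le> 0" unfolding P_def using dV_sign(2)[OF ab(1)] rho_pos[of \<alpha> a]
    by (simp add: mult_nonneg_nonpos mult_nonpos_nonneg)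
  ultimately have "(P b - P a) / 2 \<ge> 0" by simp
  thus ?thesis unfolding eq using S0 by linarith
qed


lemma zero_exists:
  fixes f r :: "real \<Rightarrow> real"
  assumes cf: "continuous_on {c..d} f" and cr: "continuous_on {c..d} r" and cd: "c < d"
    and rpos: "\<And>t. t \<in> {c..d} \<Longrightarrow> r t > 0"
    and zero: "((\<lambda>t. f t * r t) has_integral 0) {c..d}"
  shows "\<exists>x0\<in>{c..d}. f x0 = 0"
proof (rule ccontr)
  assume nz: "\<not> ?thesis"
  have ne: "box c d \<noteq> {}" using cd by simp
  show False
  proof (cases "f c > 0")
    case True
    have pos: "f t > 0" if t: "t \<in> {c..d}" for t
    proof (rule ccontr)
      assume "\<not> f t > 0"
      then obtain x where "c \<le> x" "x \<le> t" "f x = 0"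
        using IVT2'[of f t 0 c] True t continuous_on_subset[OF cf, of "{c..t}"] by auto
      thus False using nz t by auto
    qed
    have "f d * r d = 0"
      by (rule has_integral_0_cbox_imp_0[of c d "\<lambda>t. f t * r t"])
         (use zero ne cd pos rpos cf cr in \<open>auto intro!: continuous_intros less_imp_le[OF mult_pos_pos]\<close>)
    thus False using pos[of d] rpos[of d] cd by auto
  next
    case False
    hence fc: "f c < 0" using nz cd by (metis atLeastAtMost_iff less_eq_real_def not_less_iff_gr_or_eq)
    have neg: "f t < 0" if t: "t \<in> {c..d}" for t
    proof (rule ccontr)
      assume "\<not> f t < 0"
      then obtain x where "c \<le> x" "x \<le> t" "f x = 0"
        using IVT'[of f c 0 t] fc t continuous_on_subset[OF cf, of "{c..t}"] by auto
      thus False using nz t by auto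
    qed
    have z2: "((\<lambda>t. - (f t * r t)) has_integral 0) {c..d}" using has_integral_neg[OF zero] by simp
    have "- (f d * r d) = 0"
      by (rule has_integral_0_cbox_imp_0[of c d "\<lambda>t. - (f t * r t)"])
         (use z2 ne cd neg rpos cf cr in \<open>auto intro!: continuous_intros simp: mult_neg_pos less_imp_le\<close>)
    thus False using neg[of d] rpos[of d] cd by auto
  qed
qed

lemma ftc_sq_bound:
  fixes f f1 :: "real \<Rightarrow> real"
  assumes df: "\<And>x. (f has_real_derivative f1 x) (at x)" and cf1: "continuous_on UNIV f1"
    and st: "c \<le> s" "s \<le> t" "t \<le> d"
  shows "\<bar>f t ^ 2 - f s ^ 2\<bar> \<le> integral {c..d} (\<lambda>u. \<bar>2 * f u * f1 u\<bar>)"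
proof -
  have cf: "continuous_on S f" for S using df by (meson DERIV_isCont continuous_at_imp_continuous_on)
  have cf1S: "continuous_on S f1" for S using continuous_on_subset[OF cf1] by blast
  have d2: "((\<lambda>u. f u ^ 2) has_real_derivative 2 * f u * f1 u) (at u)" for u
    using DERIV_mult[OF df df, of u] by (simp add: power2_eq_square algebra_simps)
  have I: "((\<lambda>u. 2 * f u * f1 u) has_integral (f t ^ 2 - f s ^ 2)) {s..t}"
    by (intro fundamental_theorem_of_calculus st(2))
       (auto simp: has_real_derivative_iff_has_vector_derivative[symmetric] intro: has_field_derivative_at_within d2)
  have "\<bar>f t ^ 2 - f s ^ 2\<bar> \<le> integral {s..t} (\<lambda>u. \<bar>2 * f u * f1 u\<bar>)"
    using integral_norm_bound_integral[of "\<lambda>u. 2 * f u * f1 u" "{s..t}" "\<lambda>u. \<bar>2 * f u * f1 u\<bar>"] I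
    by (auto simp: integral_unique integrable_continuous_real continuous_intros cf cf1S has_integral_integrable)
  also have "\<dots> \<le> integral {c..d} (\<lambda>u. \<bar>2 * f u * f1 u\<bar>)"
    by (rule integral_subset_le) (use st in \<open>auto intro!: integrable_continuous_real continuous_intros cf cf1S\<close>)
  finally show ?thesis .
qed

lemma poincare:
  fixes f f1 r :: "real \<Rightarrow> real"
  assumes df: "\<And>x. (f has_real_derivative f1 x) (at x)" and cf1: "continuous_on UNIV f1"
    and cr: "continuous_on UNIV r" and cd: "c < d" and m: "m > 0"
    and bnd: "\<And>t. t \<in> {c..d} \<Longrightarrow> m \<le> r t \<and> r t \<le> Mx"
    and zero: "((\<lambda>t. f t * r t) has_integral 0) {c..d}"
  shows "integral {c..d} (\<lambda>t. f t^2 * r t) \<le> 4 * (d - c)^2 * (Mx / m) * integral {c..d} (\<lambda>t. f1 t^2 * r t)"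
proof -
  have cf: "continuous_on S f" for S using df by (meson DERIV_isCont continuous_at_imp_continuous_on)
  have cf1S: "continuous_on S f1" for S using continuous_on_subset[OF cf1] by blast
  have crS: "continuous_on S r" for S using continuous_on_subset[OF cr] by blast
  note cont = cf cf1S crS
  obtain x0 where x0: "x0 \<in> {c..d}" "f x0 = 0"
    using zero_exists[OF cf cr[THEN continuous_on_subset] cd _ zero] bnd m by fastforce
  obtain xm where xm: "xm \<in> {c..d}" "\<And>y. y \<in> {c..d} \<Longrightarrow> f y ^ 2 \<le> f xm ^ 2"
  proof -
    have "continuous_on {c..d} (\<lambda>y. f y ^ 2)" by (intro continuous_intros cont)
    thus ?thesis using continuous_attains_sup[of "{c..d}" "\<lambda>y. f y ^ 2"] cd that by auto
  qed
  define M0 where "M0 = f xm ^ 2"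
  define I1 where "I1 = integral {c..d} (\<lambda>u. f1 u ^ 2)"
  define k where "k = 2 * (d - c)"
  have k: "k > 0" using cd by (simp add: k_def)
  have A: "M0 \<le> integral {c..d} (\<lambda>u. \<bar>2 * f u * f1 u\<bar>)"
  proof (cases "x0 \<le> xm")
    case True thus ?thesis using ftc_sq_bound[OF df cf1, of c x0 xm d] x0 xm by (simp add: M0_def)
  next
    case False thus ?thesis using ftc_sq_bound[OF df cf1, of c xm x0 d] x0 xm by (simp add: M0_def abs_minus_commute)
  qed
  have amgm: "\<bar>2 * f u * f1 u\<bar> \<le> f u ^ 2 / k + k * f1 u ^ 2" for u
  proof -
    have "0 \<le> (\<bar>f u\<bar> - k * \<bar>f1 u\<bar>)^2 / k" using k by simp
    also have "(\<bar>f u\<bar> - k * \<bar>f1 u\<bar>)^2 / k = f u ^ 2 / k - 2 * \<bar>f u\<bar> * \<bar>f1 u\<bar> + k * f1 u ^ 2"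
      using k by (simp add: power2_eq_square field_simps abs_mult_self_eq)
    finally have "0 \<le> f u ^ 2 / k - 2 * \<bar>f u\<bar> * \<bar>f1 u\<bar> + k * f1 u ^ 2" .
    thus ?thesis by (simp add: abs_mult)
  qed
  have B: "integral {c..d} (\<lambda>u. \<bar>2 * f u * f1 u\<bar>) \<le> integral {c..d} (\<lambda>u. M0 / k + k * f1 u ^ 2)"
    by (rule integral_le) (use amgm xm k in \<open>auto simp: M0_def intro!: integrable_continuous_real continuous_intros cont order_trans[OF amgm] divide_right_mono\<close>)
  have C: "integral {c..d} (\<lambda>u. M0 / k + k * f1 u ^ 2) = (d - c) * M0 / k + k * I1"
    unfolding I1_def
    by (subst integral_add) (use cd in \<open>auto intro!: integrable_continuous_real continuous_intros cont\<close>)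
  have eq2: "(d - c) * M0 / k = M0 / 2" using cd by (simp add: k_def field_simps)
  have "M0 \<le> (d - c) * M0 / k + k * I1" using A B C by (metis order_trans)
  hence "M0 \<le> M0 / 2 + k * I1" by (simp only: eq2)
  hence M0b: "M0 \<le> 4 * (d - c) * I1" unfolding k_def by (simp add: algebra_simps)
  have D: "integral {c..d} (\<lambda>t. f t^2 * r t) \<le> integral {c..d} (\<lambda>t. M0 * Mx)"
  proof (rule integral_le)
    fix t assume t: "t \<in> {c..d}"
    have "m \<le> r t" "r t \<le> Mx" using bnd[OF t] by auto
    thus "f t^2 * r t \<le> M0 * Mx" using xm(2)[OF t] m unfolding M0_def by (intro mult_mono) auto
  qed (auto intro!: integrable_continuous_real continuous_intros cont)
  have E: "I1 \<le> integral {c..d} (\<lambda>t. f1 t^2 * r t) / m"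
  proof -
    have "I1 \<le> integral {c..d} (\<lambda>t. f1 t^2 * r t / m)"
      unfolding I1_def
      by (rule integral_le) (use bnd m in \<open>auto intro!: integrable_continuous_real continuous_intros cont simp: field_simps intro: mult_right_mono\<close>)
    also have "\<dots> = integral {c..d} (\<lambda>t. f1 t^2 * r t) / m" by simp
    finally show ?thesis .
  qed
  have Mx0: "Mx \<ge> 0" using bnd[of c] cd m by auto
  have I1n: "I1 \<ge> 0" unfolding I1_def by (rule integral_nonneg) (auto intro!: integrable_continuous_real continuous_intros cont)
  have "integral {c..d} (\<lambda>t. f t^2 * r t) \<le> (d - c) * M0 * Mx" using D cd by (simp add: mult_ac)
  also have "\<dots> \<le> (d - c) * (4 * (d - c) * I1) * Mx"
    using M0b cd Mx0 by (intro mult_right_mono mult_left_mono) auto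
  also have "\<dots> \<le> (d - c) * (4 * (d - c) * (integral {c..d} (\<lambda>t. f1 t^2 * r t) / m)) * Mx"
    using E cd Mx0 by (intro mult_right_mono mult_left_mono) auto
  also have "\<dots> = 4 * (d - c)^2 * (Mx / m) * integral {c..d} (\<lambda>t. f1 t^2 * r t)"
    by (simp add: power2_eq_square field_simps)
  finally show ?thesis .
qed


lemma split3:
  fixes g :: "real \<Rightarrow> real"
  assumes "continuous_on {a..b} g" "a \<le> p" "p \<le> q" "q \<le> b"
  shows "integral {a..b} g = integral {a..p} g + integral {p..q} g + integral {q..b} g"
proof -
  have i: "g integrable_on {a..b}" "g integrable_on {p..b}"
    using assms by (auto intro!: integrable_continuous_real intro: continuous_on_subset)
  have "integral {a..p} g + integral {p..b} g = integral {a..b} g"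
    using Henstock_Kurzweil_Integration.integral_combine[OF assms(2) _ i(1)] assms by auto
  moreover have "integral {p..q} g + integral {q..b} g = integral {p..b} g"
    using Henstock_Kurzweil_Integration.integral_combine[OF assms(3) assms(4) i(2)] .
  ultimately show ?thesis by linarith
qed

lemma sum_partition:
  fixes g :: "real \<Rightarrow> real"
  assumes "continuous_on UNIV g" "l \<ge> 0"
  shows "integral {c0..c0 + real k * l} g = (\<Sum>j<k. integral {c0 + real j * l .. c0 + real (Suc j) * l} g)"
proof (induction k)
  case 0 thus ?case by simp
next
  case (Suc k)
  have i: "g integrable_on {c0..c0 + real (Suc k) * l}"
    using assms by (auto intro!: integrable_continuous_real intro: continuous_on_subset)
  have "integral {c0..c0 + real k * l} g + integral {c0 + real k * l..c0 + real (Suc k) * l} g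
        = integral {c0..c0 + real (Suc k) * l} g"
    by (rule Henstock_Kurzweil_Integration.integral_combine[OF _ _ i]) (use assms in \<open>auto intro: mult_right_mono\<close>)
  thus ?case using Suc by simp
qed

lemma inner_outer:
  fixes f f1 :: "real \<Rightarrow> real" and n :: nat
  assumes a2: "\<alpha> > 2" and df: "\<And>x. (f has_real_derivative f1 x) (at x)"
    and cf1: "continuous_on UNIV f1" and n: "n \<ge> 1" and R: "R > 0" and E: "E > 0"
    and ratio: "\<And>s t. \<bar>s\<bar> \<le> R \<Longrightarrow> \<bar>t\<bar> \<le> R \<Longrightarrow> \<bar>s - t\<bar> \<le> 2 * R / n \<Longrightarrow> rho \<alpha> s \<le> E * rho \<alpha> t"
    and Wt: "Wt > 0" "\<And>t. \<bar>t\<bar> \<ge> R \<Longrightarrow> W \<alpha> t \<ge> Wt"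
    and W0: "W0 \<ge> 0" "\<And>t. \<bar>t\<bar> \<le> R \<Longrightarrow> W \<alpha> t \<ge> - W0"
    and orth: "\<And>j. j < n \<Longrightarrow> ((\<lambda>t. f t * rho \<alpha> t) has_integral 0)
                 {- R + real j * (2 * R / n) .. - R + real (Suc j) * (2 * R / n)}"
    and ab: "a \<le> - R" "R \<le> b"
  shows "integral {a..b} (\<lambda>t. f t^2 * rho \<alpha> t) \<le>
    ((1 + W0 * (4 * (2 * R / n)^2 * E^2)) / Wt + 4 * (2 * R / n)^2 * E^2) * integral {a..b} (\<lambda>t. f1 t^2 * rho \<alpha> t)"
proof -
  define l where "l = 2 * R / n"
  define P where "P = 4 * l^2 * E^2"
  have a1: "\<alpha> > 1" using a2 by simp
  have l: "l > 0" using R n by (simp add: l_def)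
  have cf: "continuous_on S f" for S using df by (meson DERIV_isCont continuous_at_imp_continuous_on)
  have cf1S: "continuous_on S f1" for S using continuous_on_subset[OF cf1] by blast
  note cont = cf cf1S cont_rho[OF a1] cont_W[OF a2]
  define g1 where "g1 t = f t^2 * rho \<alpha> t" for t
  define g2 where "g2 t = f1 t^2 * rho \<alpha> t" for t
  define g3 where "g3 t = f t^2 * W \<alpha> t * rho \<alpha> t" for t
  have cg: "continuous_on S g1" "continuous_on S g2" "continuous_on S g3" for S
    unfolding g1_def[abs_def] g2_def[abs_def] g3_def[abs_def] by (intro continuous_intros cont)+
  have g1n: "g1 t \<ge> 0" "g2 t \<ge> 0" for t using rho_pos[of \<alpha> t] by (auto simp: g1_def g2_def)
  have nl: "- R + real n * l = R" using n by (simp add: l_def)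
  have piece: "integral {- R + real j * l .. - R + real (Suc j) * l} g1 \<le> P * integral {- R + real j * l .. - R + real (Suc j) * l} g2"
    if j: "j < n" for j
  proof -
    define c where "c = - R + real j * l"
    define d where "d = - R + real (Suc j) * l"
    have cd: "c < d" using l by (simp add: c_def d_def algebra_simps)
    have dc: "d - c = l" by (simp add: c_def d_def algebra_simps)
    have cR: "- R \<le> c" using l by (simp add: c_def)
    have dR: "d \<le> R"
    proof -
      have "real (Suc j) * l \<le> real n * l" using j l by (intro mult_right_mono) auto
      thus ?thesis using nl by (simp add: d_def)
    qed
    have bnd: "rho \<alpha> c / E \<le> rho \<alpha> t \<and> rho \<alpha> t \<le> E * rho \<alpha> c" if t: "t \<in> {c..d}" for t
    proof -
      have abs: "\<bar>t\<bar> \<le> R" "\<bar>c\<bar> \<le> R" "\<bar>t - c\<bar> \<le> 2 * R / n" "\<bar>c - t\<bar> \<le> 2 * R / n"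
        using t cR dR cd dc by (auto simp: l_def)
      show ?thesis using ratio[OF abs(1,2,3)] ratio[OF abs(2,1,4)] E by (simp add: field_simps)
    qed
    have "integral {c..d} g1 \<le> 4 * (d - c)^2 * ((E * rho \<alpha> c) / (rho \<alpha> c / E)) * integral {c..d} g2"
      unfolding g1_def g2_def
      by (rule poincare[OF df cf1 cont_rho[OF a1] cd _ bnd orth[OF j, folded l_def, folded c_def d_def]])
         (use E rho_pos in auto)
    also have "4 * (d - c)^2 * ((E * rho \<alpha> c) / (rho \<alpha> c / E)) = P"
      using rho_pos[of \<alpha> c] E by (simp add: dc P_def power2_eq_square)
    finally show ?thesis unfolding c_def d_def .
  qed
  have J: "integral {-R..R} g1 \<le> P * integral {-R..R} g2"
  proof -
    have "integral {-R..R} g1 = (\<Sum>j<n. integral {- R + real j * l .. - R + real (Suc j) * l} g1)"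
      using sum_partition[OF cg(1) less_imp_le[OF l], of "-R" n] nl by simp
    also have "\<dots> \<le> (\<Sum>j<n. P * integral {- R + real j * l .. - R + real (Suc j) * l} g2)"
      by (intro sum_mono piece) auto
    also have "\<dots> = P * integral {-R..R} g2"
      using sum_partition[OF cg(2) less_imp_le[OF l], of "-R" n] nl by (simp add: sum_distrib_left)
    finally show ?thesis .
  qed
  have ab': "a \<le> -R" "-R \<le> R" "R \<le> b" using ab R by auto
  have s1: "integral {a..b} g1 = integral {a..-R} g1 + integral {-R..R} g1 + integral {R..b} g1"
    by (rule split3[OF cg(1) ab'])
  have s2: "integral {a..b} g2 = integral {a..-R} g2 + integral {-R..R} g2 + integral {R..b} g2"
    by (rule split3[OF cg(2) ab'])
  have s3: "integral {a..b} g3 = integral {a..-R} g3 + integral {-R..R} g3 + integral {R..b} g3"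
    by (rule split3[OF cg(3) ab'])
  have int: "h integrable_on {x..y}" if "continuous_on UNIV h" for h :: "real \<Rightarrow> real" and x y
    by (intro integrable_continuous_real continuous_on_subset[OF that]) auto
  have cgU: "continuous_on UNIV g1" "continuous_on UNIV g2" "continuous_on UNIV g3" using cg by auto
  have ptW: "Wt * g1 t \<le> g3 t" if "\<bar>t\<bar> \<ge> R" for t
  proof -
    have "Wt * g1 t = Wt * (f t^2 * rho \<alpha> t)" by (simp add: g1_def)
    also have "\<dots> \<le> W \<alpha> t * (f t^2 * rho \<alpha> t)"
      by (rule mult_right_mono[OF Wt(2)[OF that]]) (use rho_pos[of \<alpha> t] in simp)
    finally show ?thesis by (simp add: g3_def mult_ac)
  qed
  have ptW0: "- W0 * g1 t \<le> g3 t" if "\<bar>t\<bar> \<le> R" for t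
  proof -
    have "- W0 * g1 t = - W0 * (f t^2 * rho \<alpha> t)" by (simp add: g1_def)
    also have "\<dots> \<le> W \<alpha> t * (f t^2 * rho \<alpha> t)"
      by (rule mult_right_mono[OF W0(2)[OF that]]) (use rho_pos[of \<alpha> t] in simp)
    finally show ?thesis by (simp add: g3_def mult_ac)
  qed
  have t1: "Wt * integral {a..-R} g1 \<le> integral {a..-R} g3"
  proof -
    have "integral {a..-R} (\<lambda>t. Wt * g1 t) \<le> integral {a..-R} g3"
      by (rule integral_le) (auto intro!: int continuous_intros cgU ptW)
    thus ?thesis by simp
  qed
  have t2: "Wt * integral {R..b} g1 \<le> integral {R..b} g3"
  proof -
    have "integral {R..b} (\<lambda>t. Wt * g1 t) \<le> integral {R..b} g3"
      by (rule integral_le) (use R in \<open>auto intro!: int continuous_intros cgU ptW\<close>)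
    thus ?thesis by simp
  qed
  have t3: "- W0 * integral {-R..R} g1 \<le> integral {-R..R} g3"
  proof -
    have "integral {-R..R} (\<lambda>t. - W0 * g1 t) \<le> integral {-R..R} g3"
      by (rule integral_le) (use ptW0 in \<open>auto intro!: int continuous_intros cgU\<close>)
    thus ?thesis by simp
  qed
  have WL: "integral {a..b} g3 \<le> integral {a..b} g2"
    unfolding g3_def g2_def by (rule W_lemma[OF a2 df cf1]) (use ab R in auto)
  have nn: "integral {x..y} g2 \<ge> 0" "integral {x..y} g1 \<ge> 0" for x y
    using g1n by (auto intro!: integral_nonneg int cgU)
  define D where "D = integral {a..b} g2"
  have Din: "integral {-R..R} g2 \<le> D" using s2 nn(1)[of a "-R"] nn(1)[of R b] unfolding D_def by linarith
  have JD: "integral {-R..R} g1 \<le> P * D"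
    using J Din P_def mult_left_mono[OF Din, of P] by (simp add: P_def)
  have "Wt * (integral {a..-R} g1 + integral {R..b} g1) \<le> D + W0 * integral {-R..R} g1"
    using t1 t2 t3 WL s3 unfolding D_def by (simp add: algebra_simps)
  also have "\<dots> \<le> D + W0 * (P * D)" using JD W0(1) by (simp add: mult_left_mono)
  finally have T: "integral {a..-R} g1 + integral {R..b} g1 \<le> (1 + W0 * P) / Wt * D"
    using Wt(1) by (simp add: field_simps)
  have "integral {a..b} g1 \<le> (1 + W0 * P) / Wt * D + P * D" using s1 T JD by linarith
  thus ?thesis unfolding g1_def[abs_def] D_def g2_def[abs_def] P_def l_def by (simp add: algebra_simps)
qed


lemma boundary:
  fixes F F1 G r :: "real \<Rightarrow> real"
  assumes dF: "\<And>x. (F has_real_derivative F1 x) (at x)"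
    and cF1: "continuous_on UNIV F1" and cr: "continuous_on UNIV r"
    and rpos: "\<And>x. r x > 0" and rdec: "\<And>x y. 0 \<le> x \<Longrightarrow> x \<le> y \<Longrightarrow> r y \<le> r x"
    and U: "\<And>x y. x \<le> y \<Longrightarrow> ((\<lambda>t. G t * r t) has_integral (r y * F1 y - r x * F1 x)) {x..y}"
    and Gi: "\<And>x y. (\<lambda>t. G t^2 * r t) integrable_on {x..y}"
    and Gb: "\<And>x y. integral {x..y} (\<lambda>t. G t^2 * r t) \<le> BG"
    and Fs: "\<And>\<delta>. \<delta> > 0 \<Longrightarrow> \<exists>X. \<forall>x y. X \<le> x \<longrightarrow> x \<le> y \<longrightarrow> integral {x..y} (\<lambda>t. F t^2 * r t) \<le> \<delta>"
    and Fb: "\<And>x y. integral {x..y} (\<lambda>t. F t^2 * r t) \<le> BF"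
    and grow: "filterlim (\<lambda>y. r (y + 2) / (r y)^2) at_top at_top"
    and e: "\<epsilon> > 0"
  shows "\<exists>b\<ge>T. F b * (r b * F1 b) \<le> \<epsilon>"
proof (rule ccontr)
  assume "\<not> ?thesis"
  hence H0: "\<And>b. b \<ge> T \<Longrightarrow> F b * (r b * F1 b) > \<epsilon>" by force
  define T' where "T' = max T 0"
  have H: "F b * (r b * F1 b) > \<epsilon>" if "b \<ge> T'" for b using H0 that by (simp add: T'_def)
  have T'0: "T' \<ge> 0" by (simp add: T'_def)
  have cF: "continuous_on S F" for S using dF by (meson DERIV_isCont continuous_at_imp_continuous_on)
  have cF1S: "continuous_on S F1" for S using continuous_on_subset[OF cF1] by blast
  have crS: "continuous_on S r" for S using continuous_on_subset[OF cr] by blast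
  note cont = cF cF1S crS
  have FF1: "F b * F1 b > 0" if "b \<ge> T'" for b
  proof -
    have "0 < F b * (r b * F1 b)" using H[OF that] e by linarith
    hence "0 < r b * (F b * F1 b)" by (simp add: mult_ac)
    thus ?thesis using rpos[of b] by (simp add: zero_less_mult_iff)
  qed
  have mono: "F s ^ 2 \<le> F t ^ 2" if "T' \<le> s" "s \<le> t" for s t
  proof (rule DERIV_nonneg_imp_nondecreasing[OF that(2), of "\<lambda>u. F u ^ 2"])
    fix x assume x: "s \<le> x" "x \<le> t"
    show "\<exists>y. ((\<lambda>u. F u ^ 2) has_real_derivative y) (at x) \<and> 0 \<le> y"
      using DERIV_mult[OF dF dF, of x] FF1[of x] that x
      by (intro exI[of _ "2 * (F x * F1 x)"]) (auto simp: power2_eq_square algebra_simps)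
  qed
  define B where "B = \<bar>BG\<bar> + 1"
  have B: "B > 0" "BG \<le> B" by (auto simp: B_def)
  define \<beta> where "\<beta> = 2 * B / \<epsilon>"
  have \<beta>: "\<beta> > 0" using B e by (simp add: \<beta>_def)
  obtain X where X: "\<And>x y. X \<le> x \<Longrightarrow> x \<le> y \<Longrightarrow> integral {x..y} (\<lambda>t. F t^2 * r t) \<le> \<epsilon> / (2 * \<beta>)"
    using Fs[of "\<epsilon> / (2 * \<beta>)"] e \<beta> by auto
  define x where "x = max X T'"
  have xT: "x \<ge> T'" "x \<ge> X" "x \<ge> 0" using T'0 by (auto simp: x_def)
  have Fx0: "F x \<noteq> 0" using H[OF xT(1)] e by auto
  have lower: "F x * (r y * F1 y) > \<epsilon> / 2" if y: "y \<ge> x" for y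
  proof -
    have Ui: "((\<lambda>t. F x * (G t * r t)) has_integral (F x * (r y * F1 y - r x * F1 x))) {x..y}"
      using has_integral_mult_right[OF U[OF y]] .
    define bd where "bd t = (\<beta> * (F t^2 * r t) + G t^2 * r t / \<beta>) / 2" for t
    define IF where "IF = integral {x..y} (\<lambda>t. F t^2 * r t)"
    define IG where "IG = integral {x..y} (\<lambda>t. G t^2 * r t)"
    have iF: "((\<lambda>t. F t^2 * r t) has_integral IF) {x..y}"
      unfolding IF_def by (intro integrable_integral integrable_continuous_real continuous_intros cont)
    have iG: "((\<lambda>t. G t^2 * r t) has_integral IG) {x..y}"
      unfolding IG_def by (intro integrable_integral Gi)
    have bdI: "(bd has_integral ((\<beta> * IF + IG / \<beta>) / 2)) {x..y}"
      unfolding bd_def[abs_def] by (intro has_integral_divide has_integral_add has_integral_mult_right iF iG)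
    have bdi: "bd integrable_on {x..y}" using bdI by blast
    have pt: "norm (F x * (G t * r t)) \<le> bd t" if t: "t \<in> {x..y}" for t
    proof -
      have "F x ^ 2 \<le> F t ^ 2" using mono[of x t] t xT by auto
      have am: "2 * \<bar>F x * G t\<bar> \<le> \<beta> * F x^2 + G t^2 / \<beta>"
      proof -
        have "0 \<le> (\<beta> * \<bar>F x\<bar> - \<bar>G t\<bar>)^2 / \<beta>" using \<beta> by simp
        also have "\<dots> = \<beta> * F x^2 - 2 * \<bar>F x * G t\<bar> + G t^2 / \<beta>"
          using \<beta> by (simp add: power2_eq_square field_simps abs_mult abs_mult_self_eq)
        finally show ?thesis by simp
      qed
      have "norm (F x * (G t * r t)) = \<bar>F x * G t\<bar> * r t" using rpos[of t] by (simp add: abs_mult)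
      also have "\<dots> \<le> ((\<beta> * F x^2 + G t^2 / \<beta>) / 2) * r t"
        using am rpos[of t] by (intro mult_right_mono) auto
      also have "\<dots> \<le> ((\<beta> * F t^2 + G t^2 / \<beta>) / 2) * r t"
        using \<open>F x ^ 2 \<le> F t ^ 2\<close> \<beta> rpos[of t] by (intro mult_right_mono) auto
      finally show ?thesis by (simp add: bd_def field_simps)
    qed
    have n1: "norm (integral {x..y} (\<lambda>t. F x * (G t * r t))) \<le> integral {x..y} bd"
      using integral_norm_bound_integral[OF has_integral_integrable[OF Ui] bdi pt] .
    have "norm (F x * (r y * F1 y - r x * F1 x)) \<le> integral {x..y} bd"
      using n1 unfolding integral_unique[OF Ui] .
    also have "integral {x..y} bd = (\<beta> * IF + IG / \<beta>) / 2"
      using bdI by (rule integral_unique)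
    also have "\<dots> \<le> (\<beta> * (\<epsilon> / (2 * \<beta>)) + B / \<beta>) / 2"
      using X[OF xT(2) y] Gb[of x y] B \<beta> unfolding IF_def[symmetric] IG_def[symmetric]
      by (intro divide_right_mono add_mono mult_left_mono) (auto intro: divide_right_mono)
    also have "\<dots> = \<epsilon> / 2" using \<beta> e B by (simp add: \<beta>_def field_simps)
    finally have "\<bar>F x * (r y * F1 y) - F x * (r x * F1 x)\<bar> \<le> \<epsilon> / 2" by (simp add: algebra_simps)
    thus ?thesis using H[OF xT(1)] by linarith
  qed
  have F1pos: "F x * F1 y \<ge> \<epsilon> / (2 * r y)" if y: "y \<ge> x" for y
    using lower[OF y] rpos[of y] e by (simp add: field_simps)
  have FxFy: "F x * F y > 0" if y: "y \<ge> x" for y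
  proof -
    have a: "F x * F1 y > 0" using F1pos[OF y] rpos[of y] e by (smt (verit) divide_pos_pos)
    have b: "F y * F1 y > 0" using FF1[of y] y xT by auto
    have "(F x * F1 y) * (F y * F1 y) > 0" using a b by simp
    hence "(F x * F y) * (F1 y)^2 > 0" by (simp add: power2_eq_square mult_ac)
    thus ?thesis by (simp add: zero_less_mult_iff)
  qed
  have grow2: "(F x)^2 * (F (y+1))^2 \<ge> (\<epsilon> / (2 * r y))^2" if y: "y \<ge> x" for y
  proof -
    have I: "((\<lambda>t. F x * F1 t) has_integral (F x * (F (y+1) - F y))) {y..y+1}"
      by (intro has_integral_mult_right fundamental_theorem_of_calculus)
         (auto simp: has_real_derivative_iff_has_vector_derivative[symmetric] intro: has_field_derivative_at_within dF)
    have "((\<lambda>t. \<epsilon> / (2 * r y)) has_integral (\<epsilon> / (2 * r y))) {y..y+1}"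
      using has_integral_const_real[of "\<epsilon> / (2 * r y)" y "y+1"] by simp
    hence "\<epsilon> / (2 * r y) \<le> F x * (F (y+1) - F y)"
    proof (rule has_integral_le[OF _ I])
      fix t assume t: "t \<in> {y..y+1}"
      have "r t \<le> r y" using rdec[of y t] t y xT by auto
      hence "\<epsilon> / (2 * r y) \<le> \<epsilon> / (2 * r t)" using rpos[of t] e by (intro divide_left_mono) auto
      also have "\<dots> \<le> F x * F1 t" using F1pos[of t] t y by auto
      finally show "\<epsilon> / (2 * r y) \<le> F x * F1 t" .
    qed
    hence "\<epsilon> / (2 * r y) \<le> F x * F (y+1)" using FxFy[OF y] by (simp add: algebra_simps)
    moreover have "0 \<le> \<epsilon> / (2 * r y)" using e rpos[of y] by simp
    ultimately have "(\<epsilon> / (2 * r y))^2 \<le> (F x * F (y+1))^2" by (rule power_mono)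
    thus ?thesis by (simp add: power_mult_distrib)
  qed
  have bound: "r (y + 2) / (r y)^2 \<le> 4 * (F x)^2 * BF / \<epsilon>^2" if y: "y \<ge> x" for y
  proof -
    have "((\<lambda>t. (F (y+1))^2 * r (y+2)) has_integral ((F (y+1))^2 * r (y+2))) {y+1..y+2}"
      using has_integral_const_real[of "(F (y+1))^2 * r (y+2)" "y+1" "y+2"] by simp
    hence "(F (y+1))^2 * r (y+2) \<le> integral {y+1..y+2} (\<lambda>t. F t^2 * r t)"
    proof (rule has_integral_le)
      show "((\<lambda>t. F t^2 * r t) has_integral integral {y+1..y+2} (\<lambda>t. F t^2 * r t)) {y+1..y+2}"
        by (intro integrable_integral integrable_continuous_real continuous_intros cont)
      fix t assume t: "t \<in> {y+1..y+2}"
      have "F (y+1)^2 \<le> F t^2" using mono[of "y+1" t] t y xT by auto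
      moreover have "r (y+2) \<le> r t" using rdec[of t "y+2"] t y xT by auto
      ultimately show "(F (y+1))^2 * r (y+2) \<le> F t^2 * r t"
        using rpos[of "y+2"] by (intro mult_mono) auto
    qed
    also have "\<dots> \<le> BF" by (rule Fb)
    finally have A: "(F (y+1))^2 * r (y+2) \<le> BF" .
    have "(\<epsilon> / (2 * r y))^2 * r (y+2) \<le> (F x)^2 * (F (y+1))^2 * r (y+2)"
      using grow2[OF y] rpos[of "y+2"] by (intro mult_right_mono) auto
    also have "\<dots> \<le> (F x)^2 * BF" using A by (simp add: mult.assoc mult_left_mono)
    finally have "\<epsilon>^2 * r (y+2) / (4 * (r y)^2) \<le> (F x)^2 * BF"
      by (simp add: power_divide power_mult_distrib mult_ac)
    thus ?thesis using rpos[of y] e by (simp add: field_simps)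
  qed
  have "eventually (\<lambda>y. r (y + 2) / (r y)^2 > 4 * (F x)^2 * BF / \<epsilon>^2) at_top"
    using grow by (simp add: filterlim_at_top_dense)
  then obtain N where N: "\<And>y. y \<ge> N \<Longrightarrow> r (y + 2) / (r y)^2 > 4 * (F x)^2 * BF / \<epsilon>^2"
    by (auto simp: eventually_at_top_linorder)
  show False using N[of "max N x"] bound[of "max N x"] by auto
qed


lemma cont_from_intervals:
  fixes F :: "real \<Rightarrow> real"
  assumes "\<And>a b. a \<le> b \<Longrightarrow> continuous_on {a..b} F"
  shows "continuous_on UNIV F"
proof -
  have "isCont F x" for x
    using continuous_on_interior[OF assms[of "x - 1" "x + 1"], of x] by auto
  thus ?thesis by (simp add: continuous_at_imp_continuous_on)
qed

lemma graph_facts: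
  assumes a2: "\<alpha> > 2" and fh: "(f, h) \<in> graphL \<alpha>"
  obtains f1 where "\<And>x. (f has_real_derivative f1 x) (at x)" "continuous_on UNIV f1"
    "\<And>x y. x \<le> y \<Longrightarrow> ((\<lambda>t. h t * rho \<alpha> t) has_integral (rho \<alpha> y * f1 y - rho \<alpha> x * f1 x)) {x..y}"
    "\<And>a b. a \<le> b \<Longrightarrow> ((\<lambda>t. f t * (h t * rho \<alpha> t) + f1 t * (rho \<alpha> t * f1 t)) has_integral
         (f b * (rho \<alpha> b * f1 b) - f a * (rho \<alpha> a * f1 a))) {a..b}"
    "f \<in> L2 \<alpha>" "h \<in> L2 \<alpha>"
proof -
  have a1: "\<alpha> > 1" using a2 by simp
  from fh obtain f1 f2 where df: "\<And>x. (f has_real_derivative f1 x) (at x)"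
    and f2m: "f2 \<in> borel_measurable borel"
    and f2i: "\<And>a b. a \<le> b \<Longrightarrow> f2 absolutely_integrable_on {a..b} \<and> (f2 has_integral (f1 b - f1 a)) {a..b}"
    and heq: "\<And>x. h x = f2 x - deriv (V \<alpha>) x * f1 x"
    and L: "f \<in> L2 \<alpha>" "h \<in> L2 \<alpha>"
    unfolding graphL_def by blast
  have heq': "h x = f2 x - dV \<alpha> x * f1 x" for x using heq[of x] deriv_V[OF a1] by simp
  have cf1ab: "continuous_on {a..b} f1" if "a \<le> b" for a b
  proof -
    have gi: "f2 integrable_on {a..b}" using f2i[OF that] by blast
    have eq: "f1 x = f1 a + integral {a..x} f2" if "x \<in> {a..b}" for x
      using f2i[of a x] that by (auto dest: integral_unique)
    have "continuous_on {a..b} (\<lambda>x. f1 a + integral {a..x} f2)"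
      by (intro continuous_intros indefinite_integral_continuous_1 gi)
    thus ?thesis using eq by (metis (no_types, lifting) continuous_on_cong)
  qed
  have cf1: "continuous_on UNIV f1" by (rule cont_from_intervals[OF cf1ab])
  have cf1S: "continuous_on S f1" for S using continuous_on_subset[OF cf1] by blast
  have cf: "continuous_on S f" for S using df by (meson DERIV_isCont continuous_at_imp_continuous_on)
  have U: "((\<lambda>t. h t * rho \<alpha> t) has_integral (rho \<alpha> y * f1 y - rho \<alpha> x * f1 x)) {x..y}" if xy: "x \<le> y" for x y
  proof -
    have "((\<lambda>t. rho \<alpha> t * f2 t + (- dV \<alpha> t * rho \<alpha> t) * f1 t) has_integral (rho \<alpha> y * f1 y - rho \<alpha> x * f1 x)) {x..y}"
    proof (rule ibp_ac[OF xy])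
      show "\<And>t. t \<in> {x..y} \<Longrightarrow> (rho \<alpha> has_real_derivative - dV \<alpha> t * rho \<alpha> t) (at t)"
        using rho_has_deriv[OF a1] by blast
      show "continuous_on {x..y} (\<lambda>t. - dV \<alpha> t * rho \<alpha> t)"
        by (intro continuous_intros cont_dV[OF a2] cont_rho[OF a1])
      show "f2 absolutely_integrable_on {x..y}" using f2i[OF xy] by blast
      show "\<And>s t. x \<le> s \<Longrightarrow> s \<le> t \<Longrightarrow> t \<le> y \<Longrightarrow> (f2 has_integral f1 t - f1 s) {s..t}"
        using f2i by blast
    qed
    moreover have "(\<lambda>t. rho \<alpha> t * f2 t + (- dV \<alpha> t * rho \<alpha> t) * f1 t) = (\<lambda>t. h t * rho \<alpha> t)"
      by (simp add: fun_eq_iff heq' algebra_simps)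
    ultimately show ?thesis by simp
  qed
  have M1: "((\<lambda>t. f t * (h t * rho \<alpha> t) + f1 t * (rho \<alpha> t * f1 t)) has_integral
         (f b * (rho \<alpha> b * f1 b) - f a * (rho \<alpha> a * f1 a))) {a..b}" if ab: "a \<le> b" for a b
  proof (rule ibp_ac[OF ab])
    show "\<And>x. x \<in> {a..b} \<Longrightarrow> (f has_real_derivative f1 x) (at x)" using df by blast
    show "continuous_on {a..b} f1" by (rule cf1S)
    show "\<And>x y. a \<le> x \<Longrightarrow> x \<le> y \<Longrightarrow> y \<le> b \<Longrightarrow>
        ((\<lambda>t. h t * rho \<alpha> t) has_integral rho \<alpha> y * f1 y - rho \<alpha> x * f1 x) {x..y}" using U by blast
    have bnd: "bounded (rho \<alpha> ` {a..b})"
      by (intro compact_imp_bounded compact_continuous_image cont_rho[OF a1]) auto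
    have A: "(\<lambda>t. rho \<alpha> t * f2 t) absolutely_integrable_on {a..b}"
      by (rule absolutely_integrable_bounded_measurable_product_real[OF
          continuous_imp_measurable_on_sets_lebesgue[OF cont_rho[OF a1]] _ bnd]) (use f2i[OF ab] in auto)
    have B: "(\<lambda>t. - dV \<alpha> t * f1 t * rho \<alpha> t) absolutely_integrable_on {a..b}"
      by (intro absolutely_integrable_continuous_real continuous_intros cont_dV[OF a2] cont_rho[OF a1] cf1S)
    have "(\<lambda>t. rho \<alpha> t * f2 t + - dV \<alpha> t * f1 t * rho \<alpha> t) absolutely_integrable_on {a..b}"
      using set_integral_add(1)[OF A B] .
    moreover have "(\<lambda>t. rho \<alpha> t * f2 t + - dV \<alpha> t * f1 t * rho \<alpha> t) = (\<lambda>t. h t * rho \<alpha> t)"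
      by (simp add: fun_eq_iff heq' algebra_simps)
    ultimately show "(\<lambda>t. h t * rho \<alpha> t) absolutely_integrable_on {a..b}" by simp
  qed
  show ?thesis by (rule that[OF df cf1 U M1 L])
qed


definition dens :: "real \<Rightarrow> real \<Rightarrow> real" where
  "dens a x = max 0 (exp (- V a x) / Zc a)"

lemma mu_eq: "mu a = density lborel (\<lambda>x. ennreal (dens a x))"
proof -
  have "(\<lambda>x. ennreal (exp (- V a x) / Zc a)) = (\<lambda>x. ennreal (dens a x))"
    by (auto simp: fun_eq_iff dens_def max_def ennreal_eq_0_iff ennreal_neg)
  thus ?thesis by (simp add: mu_def)
qed

lemma meas_V: "a > 1 \<Longrightarrow> V a \<in> borel_measurable borel"
  by (intro borel_measurable_continuous_onI) (meson DERIV_isCont V_has_deriv continuous_at_imp_continuous_on)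

lemma meas_dens: "a > 1 \<Longrightarrow> dens a \<in> borel_measurable borel"
proof -
  assume a: "a > 1"
  have cV: "continuous_on UNIV (V a)" by (meson DERIV_isCont V_has_deriv[OF a] continuous_at_imp_continuous_on)
  have deq: "dens a = (\<lambda>x. max 0 (exp (- V a x) * inverse (Zc a)))"
    by (simp add: dens_def[abs_def] divide_inverse)
  show ?thesis unfolding deq
    by (intro borel_measurable_continuous_onI continuous_intros continuous_on_compose2[OF cV]) auto
qed

lemma meas_lborel: "k \<in> borel_measurable borel \<Longrightarrow> k \<in> borel_measurable lborel"
  by simp

lemma integrable_mu:
  assumes a: "a > 1" and k: "k \<in> borel_measurable borel"
  shows "integrable (mu a) k \<longleftrightarrow> integrable lborel (\<lambda>x. dens a x * k x)"
  unfolding mu_eq using integrable_density[of k lborel "dens a"] meas_dens[OF a] k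
  by (simp add: dens_def)

lemma integral_mu:
  assumes a: "a > 1" and k: "k \<in> borel_measurable borel"
  shows "integral\<^sup>L (mu a) k = integral\<^sup>L lborel (\<lambda>x. dens a x * k x)"
  unfolding mu_eq using integral_density[of k lborel "dens a"] meas_dens[OF a] k
  by (simp add: dens_def)

lemma L2_prod:
  assumes a: "a > 1" and f: "f \<in> L2 a" and g: "g \<in> L2 a"
  shows "integrable (mu a) (\<lambda>x. f x * g x)"
proof -
  have fm: "f \<in> borel_measurable borel" and gm: "g \<in> borel_measurable borel"
    and fi: "integrable (mu a) (\<lambda>x. (f x)^2)" and gi: "integrable (mu a) (\<lambda>x. (g x)^2)"
    using f g by (auto simp: L2_def)
  have "integrable (mu a) (\<lambda>x. (f x)^2 + (g x)^2)" using fi gi by simp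
  moreover have "(\<lambda>x. f x * g x) \<in> borel_measurable (mu a)"
    using fm gm by (simp add: mu_def)
  moreover have "AE x in mu a. norm (f x * g x) \<le> norm ((f x)^2 + (g x)^2)"
  proof (rule AE_I2)
    fix x
    have "2 * \<bar>f x * g x\<bar> \<le> (f x)^2 + (g x)^2"
      using sum_squares_bound[of "\<bar>f x\<bar>" "\<bar>g x\<bar>"] by (simp add: abs_mult power2_abs)
    thus "norm (f x * g x) \<le> norm ((f x)^2 + (g x)^2)" by simp
  qed
  ultimately show ?thesis by (rule Bochner_Integration.integrable_bound)
qed

lemma indicator_L2:
  assumes a: "a > 1"
  shows "(indicator {c..d} :: real \<Rightarrow> real) \<in> L2 a"
proof -
  have m: "(indicator {c..d} :: real \<Rightarrow> real) \<in> borel_measurable borel" by simp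
  have "integrable lborel (\<lambda>x. dens a x * (indicator {c..d} x)^2)"
  proof (rule Bochner_Integration.integrable_bound)
    show "integrable lborel (\<lambda>x. \<bar>1 / Zc a\<bar> * (indicator {c..d} x :: real))"
      using emeasure_lborel_Icc_eq[of c d] by (intro integrable_mult_right integrable_real_indicator) auto
    show "(\<lambda>x. dens a x * (indicator {c..d} x)^2) \<in> borel_measurable lborel"
      using meas_dens[OF a] by simp
    show "AE x in lborel. norm (dens a x * (indicator {c..d} x)^2) \<le> norm (\<bar>1 / Zc a\<bar> * (indicator {c..d} x :: real))"
    proof (rule AE_I2)
      fix x
      have e1: "exp (- V a x) \<le> 1" using V_nonneg[of a x] a by simp
      have "dens a x \<le> \<bar>1 / Zc a\<bar>"
      proof (cases "Zc a > 0")
        case True thus ?thesis using e1 by (auto simp: dens_def divide_right_mono)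
      next
        case False thus ?thesis by (auto simp: dens_def divide_nonneg_nonpos)
      qed
      moreover have "dens a x \<ge> 0" by (simp add: dens_def)
      ultimately show "norm (dens a x * (indicator {c..d} x)^2) \<le> norm (\<bar>1 / Zc a\<bar> * (indicator {c..d} x :: real))"
        by (auto simp: indicator_def)
    qed
  qed
  thus ?thesis unfolding L2_def using integrable_mu[OF a] m by simp
qed


lemma grow_rho: "\<alpha> > 2 \<Longrightarrow> filterlim (\<lambda>y. rho \<alpha> (y + 2) / (rho \<alpha> y)^2) at_top at_top"
proof -
  assume a2: "\<alpha> > 2"
  have L: "filterlim (\<lambda>y::real. 2 * (y powr \<alpha> / \<alpha>) - (y + 2) powr \<alpha> / \<alpha>) at_top at_top"
    using a2 by real_asymp
  have L2: "filterlim (\<lambda>y::real. exp (2 * (y powr \<alpha> / \<alpha>) - (y + 2) powr \<alpha> / \<alpha>)) at_top at_top"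
    by (rule filterlim_compose[OF exp_at_top L])
  have ev: "eventually (\<lambda>y. exp (2 * (y powr \<alpha> / \<alpha>) - (y + 2) powr \<alpha> / \<alpha>) = rho \<alpha> (y + 2) / (rho \<alpha> y)^2) at_top"
  proof (rule eventually_mono[OF eventually_ge_at_top[of 0]])
    fix y :: real assume y: "y \<ge> 0"
    have "rho \<alpha> (y + 2) / (rho \<alpha> y)^2 = exp (- ((y + 2) powr \<alpha> / \<alpha>)) / exp (- (y powr \<alpha> / \<alpha>))^2"
      using y by (simp add: rho_def V_def)
    also have "\<dots> = exp (2 * (y powr \<alpha> / \<alpha>) - (y + 2) powr \<alpha> / \<alpha>)"
      by (simp add: power2_eq_square exp_diff[symmetric] exp_add[symmetric] exp_minus field_simps)
    finally show "exp (2 * (y powr \<alpha> / \<alpha>) - (y + 2) powr \<alpha> / \<alpha>) = rho \<alpha> (y + 2) / (rho \<alpha> y)^2" by simp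
  qed
  show ?thesis using filterlim_cong[OF refl refl ev] L2 by simp
qed


lemma tail_approx:
  fixes g :: "real \<Rightarrow> real"
  assumes "(g has_integral I) UNIV" "e > 0"
  shows "\<exists>T>0. \<forall>a b. a \<le> -T \<longrightarrow> T \<le> b \<longrightarrow> \<bar>integral {a..b} g - I\<bar> < e"
proof -
  from assms(1)[unfolded has_integral_alt'[of g I UNIV]] assms(2)
  obtain B where B: "B > 0" "\<And>a b. ball 0 B \<subseteq> cbox a b \<Longrightarrow> norm (integral (cbox a b) g - I) < e"
    by auto
  show ?thesis
  proof (intro exI[of _ B] conjI allI impI)
    fix a b :: real assume ab: "a \<le> -B" "B \<le> b"
    have "ball 0 B \<subseteq> cbox a b" using ab by (auto simp: dist_real_def)
    thus "\<bar>integral {a..b} g - I\<bar> < e" using B(2)[of a b] by simp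
  qed (use B in auto)
qed

lemma tails_facts:
  fixes g :: "real \<Rightarrow> real"
  assumes gi: "(g has_integral I) UNIV" and gn: "\<And>x. g x \<ge> 0"
  shows "\<And>x y. g integrable_on {x..y}"
    and "\<And>x y. integral {x..y} g \<le> I"
    and "\<And>\<delta>. \<delta> > 0 \<Longrightarrow> \<exists>X. \<forall>x y. X \<le> x \<longrightarrow> x \<le> y \<longrightarrow> integral {x..y} g \<le> \<delta>"
proof -
  have gU: "g integrable_on UNIV" using gi by blast
  show gs: "g integrable_on {x..y}" for x y by (rule integrable_on_subinterval[OF gU]) auto
  show "integral {x..y} g \<le> I" for x y
    using integral_subset_le[of "{x..y}" UNIV g, OF _ gs gU] gn integral_unique[OF gi] by auto
  fix \<delta> :: real assume d: "\<delta> > 0"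
  obtain T where T: "T > 0" "\<And>a b. a \<le> -T \<Longrightarrow> T \<le> b \<Longrightarrow> \<bar>integral {a..b} g - I\<bar> < \<delta> / 2"
    using tail_approx[OF gi, of "\<delta>/2"] d by auto
  show "\<exists>X. \<forall>x y. X \<le> x \<longrightarrow> x \<le> y \<longrightarrow> integral {x..y} g \<le> \<delta>"
  proof (intro exI[of _ T] allI impI)
    fix x y assume xy: "T \<le> x" "x \<le> y"
    have "integral {-T..x} g + integral {x..y} g = integral {-T..y} g"
      by (rule Henstock_Kurzweil_Integration.integral_combine) (use xy T gs in auto)
    moreover have "\<bar>integral {-T..x} g - I\<bar> < \<delta> / 2" "\<bar>integral {-T..y} g - I\<bar> < \<delta> / 2"
      using T(2)[of "-T" x] T(2)[of "-T" y] xy by auto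
    ultimately show "integral {x..y} g \<le> \<delta>" by linarith
  qed
qed

lemma has_integral_reflect_UNIV:
  fixes f :: "real \<Rightarrow> real"
  assumes "(f has_integral i) UNIV"
  shows "((\<lambda>x. f (-x)) has_integral i) UNIV"
proof -
  have "(\<forall>a b. (\<lambda>x. f (-x)) integrable_on cbox a b) \<and>
    (\<forall>e>0. \<exists>B>0. \<forall>a b. ball 0 B \<subseteq> cbox a b \<longrightarrow> norm (integral (cbox a b) (\<lambda>x. f (-x)) - i) < e)"
  proof (intro conjI allI impI)
    fix a b :: real
    have "f integrable_on {-b..-a}" using assms by (meson integrable_on_subinterval has_integral_integrable subset_UNIV)
    then obtain j where "(f has_integral j) {-b..-a}" by blast
    hence "((\<lambda>x. f (-x)) has_integral j) {a..b}"
      using has_integral_reflect_real[of f j "-a" "-b"] by simp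
    thus "(\<lambda>x. f (-x)) integrable_on cbox a b" by auto
  next
    fix e :: real assume e: "e > 0"
    from assms[unfolded has_integral_alt'[of f i UNIV]] e
    obtain B where B: "B > 0" "\<And>a b. ball 0 B \<subseteq> cbox a b \<Longrightarrow> norm (integral (cbox a b) f - i) < e"
      by auto
    show "\<exists>B>0. \<forall>a b. ball 0 B \<subseteq> cbox a b \<longrightarrow> norm (integral (cbox a b) (\<lambda>x. f (-x)) - i) < e"
    proof (intro exI[of _ B] conjI allI impI)
      fix a b :: real assume sub: "ball 0 B \<subseteq> cbox a b"
      have sub': "ball 0 B \<subseteq> cbox (-b) (-a)"
      proof
        fix x :: real assume "x \<in> ball 0 B"
        hence "-x \<in> ball 0 B" by (simp add: dist_real_def)
        hence "-x \<in> cbox a b" using sub by blast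
        thus "x \<in> cbox (-b) (-a)" by auto
      qed
      have "f integrable_on {-b..-a}" using assms by (meson integrable_on_subinterval has_integral_integrable subset_UNIV)
      hence "(f has_integral integral {-b..-a} f) {-b..-a}" by (simp add: has_integral_integral)
      hence "((\<lambda>x. f (-x)) has_integral integral {-b..-a} f) {a..b}"
        using has_integral_reflect_real[of f _ "-a" "-b"] by simp
      hence "integral (cbox a b) (\<lambda>x. f (-x)) = integral (cbox (-b) (-a)) f" by (simp add: integral_unique)
      thus "norm (integral (cbox a b) (\<lambda>x. f (-x)) - i) < e" using B(2)[OF sub'] by simp
    qed (use B in auto)
  qed
  thus ?thesis unfolding has_integral_alt'[of _ i UNIV] by simp
qed

lemma eps_le:
  fixes x y C :: real
  assumes "\<And>e. e > 0 \<Longrightarrow> x \<le> y + e * C"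
  shows "x \<le> y"
proof (rule ccontr)
  assume "\<not> x \<le> y"
  hence d: "x - y > 0" by simp
  define e where "e = (x - y) / (2 * (\<bar>C\<bar> + 1))"
  have e: "e > 0" using d by (simp add: e_def)
  have "e * C \<le> e * (\<bar>C\<bar> + 1)" using e by (intro mult_left_mono) auto
  also have "\<dots> = (x - y) / 2" by (simp add: e_def field_simps)
  finally have "e * C \<le> (x - y) / 2" .
  moreover have "x \<le> y + e * C" using assms[OF e] .
  ultimately show False using d by argo
qed


lemma core:
  fixes f h :: "real \<Rightarrow> real" and n :: nat
  assumes a2: "\<alpha> > 2" and fh: "(f, h) \<in> graphL \<alpha>"
    and n: "n \<ge> 1" and R: "R > 0" and E: "E > 0"
    and ratio: "\<And>s t. \<bar>s\<bar> \<le> R \<Longrightarrow> \<bar>t\<bar> \<le> R \<Longrightarrow> \<bar>s - t\<bar> \<le> 2 * R / n \<Longrightarrow> rho \<alpha> s \<le> E * rho \<alpha> t"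
    and Wt: "Wt > 0" "\<And>t. \<bar>t\<bar> \<ge> R \<Longrightarrow> W \<alpha> t \<ge> Wt"
    and W0: "W0 \<ge> 0" "\<And>t. \<bar>t\<bar> \<le> R \<Longrightarrow> W \<alpha> t \<ge> - W0"
    and orth: "\<And>j. j < n \<Longrightarrow> ((\<lambda>t. f t * rho \<alpha> t) has_integral 0)
                 {- R + real j * (2 * R / n) .. - R + real (Suc j) * (2 * R / n)}"
    and iF: "((\<lambda>x. f x^2 * rho \<alpha> x) has_integral A) UNIV"
    and iH: "((\<lambda>x. h x^2 * rho \<alpha> x) has_integral BH) UNIV"
    and iFH: "((\<lambda>x. f x * (h x * rho \<alpha> x)) has_integral B) UNIV"
  shows "A \<le> ((1 + W0 * (4 * (2 * R / n)^2 * E^2)) / Wt + 4 * (2 * R / n)^2 * E^2) * (- B)"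
proof -
  define K where "K = (1 + W0 * (4 * (2 * R / n)^2 * E^2)) / Wt + 4 * (2 * R / n)^2 * E^2"
  have K0: "K \<ge> 0" using Wt W0 by (simp add: K_def)
  have a1: "\<alpha> > 1" using a2 by simp
  obtain f1 where df: "\<And>x. (f has_real_derivative f1 x) (at x)" and cf1: "continuous_on UNIV f1"
    and U: "\<And>x y. x \<le> y \<Longrightarrow> ((\<lambda>t. h t * rho \<alpha> t) has_integral (rho \<alpha> y * f1 y - rho \<alpha> x * f1 x)) {x..y}"
    and M1: "\<And>a b. a \<le> b \<Longrightarrow> ((\<lambda>t. f t * (h t * rho \<alpha> t) + f1 t * (rho \<alpha> t * f1 t)) has_integral
         (f b * (rho \<alpha> b * f1 b) - f a * (rho \<alpha> a * f1 a))) {a..b}"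
    and "f \<in> L2 \<alpha>" "h \<in> L2 \<alpha>"
    using graph_facts[OF a2 fh] by blast
  have cf1S: "continuous_on S f1" for S using continuous_on_subset[OF cf1] by blast
  have cf: "continuous_on S f" for S using df by (meson DERIV_isCont continuous_at_imp_continuous_on)
  have fin: "integral {a..b} (\<lambda>t. f t^2 * rho \<alpha> t) \<le>
      K * (f b * (rho \<alpha> b * f1 b) - f a * (rho \<alpha> a * f1 a) - integral {a..b} (\<lambda>t. f t * (h t * rho \<alpha> t)))"
    if ab: "a \<le> -R" "R \<le> b" for a b
  proof -
    have ab': "a \<le> b" using ab R by simp
    have i1: "((\<lambda>t. f1 t^2 * rho \<alpha> t) has_integral integral {a..b} (\<lambda>t. f1 t^2 * rho \<alpha> t)) {a..b}"
      by (intro integrable_integral integrable_continuous_real continuous_intros cf1S cont_rho[OF a1])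
    have i2: "((\<lambda>t. f t * (h t * rho \<alpha> t)) has_integral integral {a..b} (\<lambda>t. f t * (h t * rho \<alpha> t))) {a..b}"
    proof -
      have "(\<lambda>t. f t * (h t * rho \<alpha> t)) integrable_on {a..b}"
      proof -
        have "(\<lambda>t. f t * (h t * rho \<alpha> t) + f1 t * (rho \<alpha> t * f1 t) - f1 t^2 * rho \<alpha> t) integrable_on {a..b}"
          using M1[OF ab'] i1 by (intro integrable_diff) blast+
        thus ?thesis by (simp add: power2_eq_square mult_ac)
      qed
      thus ?thesis by (simp add: has_integral_integral)
    qed
    have "integral {a..b} (\<lambda>t. f t * (h t * rho \<alpha> t)) + integral {a..b} (\<lambda>t. f1 t^2 * rho \<alpha> t)
          = f b * (rho \<alpha> b * f1 b) - f a * (rho \<alpha> a * f1 a)"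
    proof -
      have "((\<lambda>t. f t * (h t * rho \<alpha> t) + f1 t^2 * rho \<alpha> t) has_integral
            integral {a..b} (\<lambda>t. f t * (h t * rho \<alpha> t)) + integral {a..b} (\<lambda>t. f1 t^2 * rho \<alpha> t)) {a..b}"
        by (rule has_integral_add[OF i2 i1])
      moreover have "((\<lambda>t. f t * (h t * rho \<alpha> t) + f1 t^2 * rho \<alpha> t) has_integral
         (f b * (rho \<alpha> b * f1 b) - f a * (rho \<alpha> a * f1 a))) {a..b}"
        using M1[OF ab'] by (simp add: power2_eq_square mult_ac)
      ultimately show ?thesis using has_integral_unique by blast
    qed
    hence eqI: "integral {a..b} (\<lambda>t. f1 t^2 * rho \<alpha> t) = f b * (rho \<alpha> b * f1 b) - f a * (rho \<alpha> a * f1 a) - integral {a..b} (\<lambda>t. f t * (h t * rho \<alpha> t))"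
      by linarith
    have "integral {a..b} (\<lambda>t. f t^2 * rho \<alpha> t) \<le> K * integral {a..b} (\<lambda>t. f1 t^2 * rho \<alpha> t)"
      unfolding K_def by (rule inner_outer[OF a2 df cf1 n R E ratio Wt W0 orth ab])
    thus ?thesis unfolding eqI .
  qed
  have Fn: "f x^2 * rho \<alpha> x \<ge> 0" "h x^2 * rho \<alpha> x \<ge> 0" for x using rho_pos[of \<alpha> x] by auto
  note TF = tails_facts[OF iF Fn(1)] and TH = tails_facts[OF iH Fn(2)]
  have iF': "((\<lambda>x. f (-x)^2 * rho \<alpha> x) has_integral A) UNIV"
    using has_integral_reflect_UNIV[OF iF] by (simp add: rho_even)
  have iH': "((\<lambda>x. h (-x)^2 * rho \<alpha> x) has_integral BH) UNIV"
    using has_integral_reflect_UNIV[OF iH] by (simp add: rho_even)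
  have Fn': "f (-x)^2 * rho \<alpha> x \<ge> 0" "h (-x)^2 * rho \<alpha> x \<ge> 0" for x using rho_pos[of \<alpha> x] by auto
  note TF' = tails_facts[OF iF' Fn'(1)] and TH' = tails_facts[OF iH' Fn'(2)]
  have rdec: "\<And>x y. 0 \<le> x \<Longrightarrow> x \<le> y \<Longrightarrow> rho \<alpha> y \<le> rho \<alpha> x" using rho_mono[of \<alpha>] a2 by simp
  have bd_plus: "\<exists>b\<ge>T. f b * (rho \<alpha> b * f1 b) \<le> e" if e: "e > 0" for T e
    by (rule boundary[OF df cf1 cont_rho[OF a1] rho_pos rdec U TH(1) TH(2) TF(3) TF(2) grow_rho[OF a2] e])
  have bd_minus: "\<exists>b\<ge>T. f (-b) * (rho \<alpha> b * (- f1 (-b))) \<le> e" if e: "e > 0" for T e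
  proof (rule boundary[OF _ _ cont_rho[OF a1] rho_pos rdec _ TH'(1) TH'(2) TF'(3) TF'(2) grow_rho[OF a2] e])
    show "((\<lambda>x. f (- x)) has_real_derivative - f1 (- x)) (at x)" for x
      using DERIV_chain2[OF df DERIV_minus[OF DERIV_ident], of x] by simp
    show "continuous_on UNIV (\<lambda>x. - f1 (- x))"
      by (intro continuous_intros continuous_on_compose2[OF cf1]) auto
    show "((\<lambda>t. h (- t) * rho \<alpha> t) has_integral rho \<alpha> y * - f1 (- y) - rho \<alpha> x * - f1 (- x)) {x..y}"
      if xy: "x \<le> y" for x y
    proof -
      have "((\<lambda>t. h t * rho \<alpha> t) has_integral (rho \<alpha> (-x) * f1 (-x) - rho \<alpha> (-y) * f1 (-y))) {-y..-x}"
        using U[of "-y" "-x"] xy by simp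
      hence "((\<lambda>t. h (-t) * rho \<alpha> (-t)) has_integral (rho \<alpha> (-x) * f1 (-x) - rho \<alpha> (-y) * f1 (-y))) {- (-x)..- (-y)}"
        by (subst has_integral_reflect_real) simp
      thus ?thesis by (simp add: rho_even algebra_simps)
    qed
  qed (use Fn in \<open>simp_all add: rho_even\<close>)
  show ?thesis unfolding K_def[symmetric]
  proof (rule eps_le[of _ _ "1 + 3 * K"])
    fix e :: real assume e: "e > 0"
    obtain T1 where T1: "T1 > 0" "\<And>a b. a \<le> -T1 \<Longrightarrow> T1 \<le> b \<Longrightarrow> \<bar>integral {a..b} (\<lambda>x. f x^2 * rho \<alpha> x) - A\<bar> < e"
      using tail_approx[OF iF e] by auto
    obtain T2 where T2: "T2 > 0" "\<And>a b. a \<le> -T2 \<Longrightarrow> T2 \<le> b \<Longrightarrow> \<bar>integral {a..b} (\<lambda>x. f x * (h x * rho \<alpha> x)) - B\<bar> < e"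
      using tail_approx[OF iFH e] by auto
    define T where "T = max (max T1 T2) R"
    obtain b where b: "b \<ge> T" "f b * (rho \<alpha> b * f1 b) \<le> e" using bd_plus[OF e] by blast
    obtain b' where b': "b' \<ge> T" "f (-b') * (rho \<alpha> b' * (- f1 (-b'))) \<le> e" using bd_minus[OF e] by blast
    define a where "a = - b'"
    have a: "a \<le> -T" "- e \<le> f a * (rho \<alpha> a * f1 a)" using b' by (auto simp: a_def rho_even)
    have ab: "a \<le> -R" "R \<le> b" "a \<le> -T1" "T1 \<le> b" "a \<le> -T2" "T2 \<le> b" using a b by (auto simp: T_def)
    have A1: "A < integral {a..b} (\<lambda>x. f x^2 * rho \<alpha> x) + e" using T1(2)[OF ab(3,4)] by linarith
    have B1: "- integral {a..b} (\<lambda>x. f x * (h x * rho \<alpha> x)) < - B + e" using T2(2)[OF ab(5,6)] by linarith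
    have "integral {a..b} (\<lambda>x. f x^2 * rho \<alpha> x) \<le> K * (e + e + (- B + e))"
    proof -
      have "integral {a..b} (\<lambda>t. f t^2 * rho \<alpha> t) \<le>
          K * (f b * (rho \<alpha> b * f1 b) - f a * (rho \<alpha> a * f1 a) - integral {a..b} (\<lambda>t. f t * (h t * rho \<alpha> t)))"
        by (rule fin[OF ab(1,2)])
      also have "\<dots> \<le> K * (e + e + (- B + e))"
        using b(2) a(2) B1 K0 by (intro mult_left_mono) auto
      finally show ?thesis .
    qed
    thus "A \<le> K * - B + e * (1 + 3 * K)" using A1 by (simp add: algebra_simps)
  qed
qed


lemma V_lip:
  assumes a1: "\<alpha> > 1" and s: "\<bar>s\<bar> \<le> R" and t: "\<bar>t\<bar> \<le> R"
  shows "V \<alpha> t - V \<alpha> s \<le> R powr (\<alpha> - 1) * \<bar>t - s\<bar>"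
proof -
  have gen: "\<bar>V \<alpha> y - V \<alpha> x\<bar> \<le> R powr (\<alpha> - 1) * (y - x)" if xy: "x < y" "\<bar>x\<bar> \<le> R" "\<bar>y\<bar> \<le> R" for x y
  proof -
    obtain z where z: "x < z" "z < y" "V \<alpha> y - V \<alpha> x = (y - x) * dV \<alpha> z"
      using MVT2[OF xy(1), of "V \<alpha>" "dV \<alpha>"] V_has_deriv[OF a1] by blast
    have "\<bar>z\<bar> \<le> R" using z xy by auto
    hence "\<bar>dV \<alpha> z\<bar> \<le> R powr (\<alpha> - 1)" unfolding abs_dV using a1 by (intro powr_mono2) auto
    thus ?thesis using z xy by (simp add: abs_mult mult.commute mult_left_mono)
  qed
  show ?thesis
  proof (cases s t rule: linorder_cases)
    case less thus ?thesis using gen[OF less s t] by auto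
  next
    case equal thus ?thesis by simp
  next
    case greater thus ?thesis using gen[OF greater t s] by (auto simp: abs_minus_commute)
  qed
qed

lemma mu_HK:
  assumes a1: "\<alpha> > 1" and Z: "Zc \<alpha> > 0" and k: "k \<in> borel_measurable borel" and ki: "integrable (mu \<alpha>) k"
  shows "((\<lambda>x. k x * rho \<alpha> x) has_integral (Zc \<alpha> * integral\<^sup>L (mu \<alpha>) k)) UNIV"
proof -
  have d: "dens \<alpha> x = rho \<alpha> x / Zc \<alpha>" for x using Z by (simp add: dens_def rho_def)
  have "integrable lborel (\<lambda>x. dens \<alpha> x * k x)" using ki integrable_mu[OF a1 k] by simp
  hence "((\<lambda>x. dens \<alpha> x * k x) has_integral integral\<^sup>L (mu \<alpha>) k) UNIV"
    using has_integral_integral_lborel integral_mu[OF a1 k] by simp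
  hence "((\<lambda>x. Zc \<alpha> * (dens \<alpha> x * k x)) has_integral (Zc \<alpha> * integral\<^sup>L (mu \<alpha>) k)) UNIV"
    by (rule has_integral_mult_right)
  moreover have "(\<lambda>x. Zc \<alpha> * (dens \<alpha> x * k x)) = (\<lambda>x. k x * rho \<alpha> x)" using Z by (simp add: fun_eq_iff d)
  ultimately show ?thesis by simp
qed


lemma constants:
  fixes \<alpha> :: real and n :: nat
  assumes a2: "\<alpha> > 2" and n: "n \<ge> 1"
  defines "R \<equiv> (4 * \<alpha> * n) powr (1 / \<alpha>)" and "E \<equiv> exp (8 * \<alpha>)"
  shows "R > 0"
    and "\<And>s t. \<bar>s\<bar> \<le> R \<Longrightarrow> \<bar>t\<bar> \<le> R \<Longrightarrow> \<bar>s - t\<bar> \<le> 2 * R / n \<Longrightarrow> rho \<alpha> s \<le> E * rho \<alpha> t"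
    and "\<And>t. \<bar>t\<bar> \<ge> R \<Longrightarrow> W \<alpha> t \<ge> R powr (2 * \<alpha> - 2) / 8"
    and "\<And>t. \<bar>t\<bar> \<le> R \<Longrightarrow> W \<alpha> t \<ge> - ((\<alpha> - 1) * R powr (\<alpha> - 2) / 2)"
    and "((1 + ((\<alpha> - 1) * R powr (\<alpha> - 2) / 2) * (4 * (2 * R / n)^2 * E^2)) / (R powr (2 * \<alpha> - 2) / 8)
          + 4 * (2 * R / n)^2 * E^2) * R powr (2 * \<alpha> - 2)
         \<le> 8 * (1 + 32 * \<alpha> * (\<alpha> - 1) * E^2) + 256 * \<alpha>^2 * E^2"
    and "R powr (2 * \<alpha> - 2) \<ge> real n powr (2 * (\<alpha> - 1) / \<alpha>)"
proof -
  have a1: "\<alpha> > 1" using a2 by simp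
  have n0: "real n \<ge> 1" using n by simp
  have X: "4 * \<alpha> * n > 0" using a2 n0 by simp
  have X0: "4 * \<alpha> * n \<noteq> 0" using X by linarith
  show R0: "R > 0" unfolding R_def using X0 powr_gt_zero by blast
  have Rp: "R powr \<alpha> = 4 * \<alpha> * n"
    using X a2 n0 by (simp add: R_def powr_powr)
  have Rpa: "R powr (\<alpha> - 1) * R = R powr \<alpha>" using R0 by (simp add: powr_diff)
  have Rpb: "R powr (\<alpha> - 2) * R^2 = R powr \<alpha>" using R0 by (simp add: powr_diff power2_eq_square)
  have Rpc: "R^2 * R powr (2 * \<alpha> - 2) = (R powr \<alpha>)^2"
  proof -
    have "R^2 * R powr (2 * \<alpha> - 2) = R powr 2 * R powr (2 * \<alpha> - 2)" using R0 by (simp add: powr_realpow)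
    also have "\<dots> = R powr (2 + (2 * \<alpha> - 2))" by (rule powr_add[symmetric])
    also have "\<dots> = R powr (2 * \<alpha>)" by simp
    also have "\<dots> = (R powr \<alpha>)^2" using R0 by (simp add: powr_realpow[symmetric] powr_powr mult.commute)
    finally show ?thesis .
  qed
  show "rho \<alpha> s \<le> E * rho \<alpha> t" if st: "\<bar>s\<bar> \<le> R" "\<bar>t\<bar> \<le> R" "\<bar>s - t\<bar> \<le> 2 * R / n" for s t
  proof -
    have "V \<alpha> t - V \<alpha> s \<le> R powr (\<alpha> - 1) * \<bar>t - s\<bar>" by (rule V_lip[OF a1 st(1,2)])
    also have "\<dots> \<le> R powr (\<alpha> - 1) * (2 * R / n)" using st(3) by (intro mult_left_mono) (auto simp: abs_minus_commute)
    also have "\<dots> = 2 * (R powr (\<alpha> - 1) * R) / n" by simp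
    also have "\<dots> = 8 * \<alpha>" using Rpa Rp n0 by simp
    finally have "V \<alpha> t - V \<alpha> s \<le> 8 * \<alpha>" .
    hence "exp (- V \<alpha> s) \<le> exp (8 * \<alpha>) * exp (- V \<alpha> t)" by (simp add: exp_add[symmetric])
    thus ?thesis by (simp add: rho_def E_def)
  qed
  have Weq: "W \<alpha> t = \<bar>t\<bar> powr (2 * \<alpha> - 2) / 4 - (\<alpha> - 1) * \<bar>t\<bar> powr (\<alpha> - 2) / 2" for t
    by (simp add: W_def dV_sq ddV_def)
  show "W \<alpha> t \<ge> R powr (2 * \<alpha> - 2) / 8" if t: "\<bar>t\<bar> \<ge> R" for t
  proof -
    have t0: "\<bar>t\<bar> > 0" using t R0 by simp
    have tR: "R powr \<alpha> \<le> \<bar>t\<bar> powr \<alpha>" using t R0 a2 by (intro powr_mono2) auto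
    have "4 * (\<alpha> - 1) \<le> 4 * \<alpha> * 1" by simp
    also have "\<dots> \<le> 4 * \<alpha> * real n" using n0 a2 by (intro mult_left_mono) auto
    also have "\<dots> = R powr \<alpha>" using Rp by simp
    also have "\<dots> \<le> \<bar>t\<bar> powr \<alpha>" by (rule tR)
    finally have ta: "\<bar>t\<bar> powr \<alpha> \<ge> 4 * (\<alpha> - 1)" .
    have "(\<alpha> - 1) * \<bar>t\<bar> powr (\<alpha> - 2) / 2 \<le> \<bar>t\<bar> powr (\<alpha> - 2) * (\<bar>t\<bar> powr \<alpha> / 8)"
    proof -
      have "(\<alpha> - 1) / 2 \<le> \<bar>t\<bar> powr \<alpha> / 8" using ta by simp
      hence "\<bar>t\<bar> powr (\<alpha> - 2) * ((\<alpha> - 1) / 2) \<le> \<bar>t\<bar> powr (\<alpha> - 2) * (\<bar>t\<bar> powr \<alpha> / 8)"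
        by (rule mult_left_mono) simp
      thus ?thesis by (simp add: mult_ac)
    qed
    also have "\<dots> = \<bar>t\<bar> powr (2 * \<alpha> - 2) / 8" using t0 by (simp add: powr_add[symmetric])
    finally have "W \<alpha> t \<ge> \<bar>t\<bar> powr (2 * \<alpha> - 2) / 8" unfolding Weq by simp
    moreover have "\<bar>t\<bar> powr (2 * \<alpha> - 2) \<ge> R powr (2 * \<alpha> - 2)" using t R0 a2 by (intro powr_mono2) auto
    ultimately show ?thesis by simp
  qed
  show "W \<alpha> t \<ge> - ((\<alpha> - 1) * R powr (\<alpha> - 2) / 2)" if t: "\<bar>t\<bar> \<le> R" for t
  proof -
    have "\<bar>t\<bar> powr (\<alpha> - 2) \<le> R powr (\<alpha> - 2)" using t a2 by (intro powr_mono2) auto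
    hence "(\<alpha> - 1) * \<bar>t\<bar> powr (\<alpha> - 2) / 2 \<le> (\<alpha> - 1) * R powr (\<alpha> - 2) / 2" using a2 by simp
    moreover have "\<bar>t\<bar> powr (2 * \<alpha> - 2) / 4 \<ge> 0" by simp
    ultimately show ?thesis unfolding Weq by linarith
  qed
  define Q where "Q = R powr (2 * \<alpha> - 2)"
  define P where "P = 4 * (2 * R / n)^2 * E^2"
  define W0 where "W0 = (\<alpha> - 1) * R powr (\<alpha> - 2) / 2"
  have Q0: "Q > 0" using R0 by (simp add: Q_def)
  have PQ: "P * Q = 256 * \<alpha>^2 * E^2"
  proof -
    have "P * Q = 16 * E^2 * (R^2 * Q) / n^2" by (simp add: P_def power_divide power_mult_distrib)
    also have "\<dots> = 16 * E^2 * (4 * \<alpha> * n)^2 / n^2" unfolding Q_def Rpc Rp ..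
    also have "\<dots> = 256 * \<alpha>^2 * E^2" using n0 by (simp add: power_mult_distrib power2_eq_square)
    finally show ?thesis .
  qed
  have W0P: "W0 * P \<le> 32 * \<alpha> * (\<alpha> - 1) * E^2"
  proof -
    have "W0 * P = 8 * (\<alpha> - 1) * E^2 * (R powr (\<alpha> - 2) * R^2) / n^2"
      by (simp add: W0_def P_def power_divide power_mult_distrib)
    also have "\<dots> = 8 * (\<alpha> - 1) * E^2 * (4 * \<alpha> * n) / n^2" unfolding Rpb Rp ..
    also have "\<dots> = 32 * \<alpha> * (\<alpha> - 1) * E^2 / n" using n0 by (simp add: power2_eq_square)
    also have "\<dots> \<le> 32 * \<alpha> * (\<alpha> - 1) * E^2"
    proof -
      have "32 * \<alpha> * (\<alpha> - 1) * E^2 \<ge> 0" using a2 by simp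
      thus ?thesis using n0 by (simp add: divide_le_eq mult_le_cancel_left1)
    qed
    finally show ?thesis .
  qed
  have "((1 + W0 * P) / (Q / 8) + P) * Q = 8 * (1 + W0 * P) + P * Q" using Q0 by (simp add: field_simps)
  also have "\<dots> \<le> 8 * (1 + 32 * \<alpha> * (\<alpha> - 1) * E^2) + 256 * \<alpha>^2 * E^2" unfolding PQ by (intro add_right_mono mult_left_mono add_left_mono W0P) auto
  finally show "((1 + ((\<alpha> - 1) * R powr (\<alpha> - 2) / 2) * (4 * (2 * R / n)^2 * E^2)) / (R powr (2 * \<alpha> - 2) / 8)
          + 4 * (2 * R / n)^2 * E^2) * R powr (2 * \<alpha> - 2)
         \<le> 8 * (1 + 32 * \<alpha> * (\<alpha> - 1) * E^2) + 256 * \<alpha>^2 * E^2"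
    unfolding Q_def P_def W0_def .
  have "R powr (2 * \<alpha> - 2) = (4 * \<alpha> * n) powr (2 * (\<alpha> - 1) / \<alpha>)"
  proof -
    have "1 / \<alpha> * (2 * \<alpha> - 2) = 2 * (\<alpha> - 1) / \<alpha>" by (simp add: field_simps)
    thus ?thesis using X by (simp add: R_def powr_powr)
  qed
  also have "\<dots> \<ge> real n powr (2 * (\<alpha> - 1) / \<alpha>)"
    using a2 n0 by (intro powr_mono2) auto
  finally show "R powr (2 * \<alpha> - 2) \<ge> real n powr (2 * (\<alpha> - 1) / \<alpha>)" .
qed


theorem mainTheorem11:
  fixes \<alpha> :: real
  assumes "\<alpha> > 2"
  shows "\<exists>C>0. \<forall>n::nat. n \<ge> 1 \<longrightarrow>
           lambdaL \<alpha> n \<ge> ereal (C * real n powr (2 * (\<alpha> - 1) / \<alpha>))"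
proof -
  have a2: "\<alpha> > 2" using assms .
  have a1: "\<alpha> > 1" using a2 by simp
  define E where "E = exp (8 * \<alpha>)"
  define c2 where "c2 = 8 * (1 + 32 * \<alpha> * (\<alpha> - 1) * E^2) + 256 * \<alpha>^2 * E^2"
  have E0: "E > 0" by (simp add: E_def)
  have c2: "c2 > 0" using a2 E0 unfolding c2_def by (intro add_pos_pos mult_pos_pos) auto
  show ?thesis
  proof (intro exI[of _ "1 / c2"] conjI allI impI)
    show "1 / c2 > 0" using c2 by simp
    fix n :: nat assume n: "n \<ge> 1"
    have n0: "real n \<ge> 1" using n by simp
    define R where "R = (4 * \<alpha> * n) powr (1 / \<alpha>)"
    note C = constants[OF a2 n, folded R_def E_def]
    define l where "l = 2 * R / n"
    define g where "g = (\<lambda>j::nat. (indicator {- R + real j * l .. - R + real (Suc j) * l} :: real \<Rightarrow> real))"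
    define K where "K = (1 + ((\<alpha> - 1) * R powr (\<alpha> - 2) / 2) * (4 * (2 * R / n)^2 * E^2)) / (R powr (2 * \<alpha> - 2) / 8)
          + 4 * (2 * R / n)^2 * E^2"
    define Q where "Q = R powr (2 * \<alpha> - 2)"
    have R0: "R > 0" by (rule C(1))
    have Q0: "Q > 0" using R0 by (simp add: Q_def)
    have KQ: "K * Q \<le> c2" using C(5) unfolding K_def Q_def c2_def .
    have Qn: "real n powr (2 * (\<alpha> - 1) / \<alpha>) \<le> Q" using C(6) unfolding Q_def .
    have P0: "4 * (2 * R / n)^2 * E^2 > 0" using R0 E0 n0 by simp
    have K0: "K > 0"
    proof -
      have "(1 + ((\<alpha> - 1) * R powr (\<alpha> - 2) / 2) * (4 * (2 * R / n)^2 * E^2)) / (R powr (2 * \<alpha> - 2) / 8) \<ge> 0"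
        using a2 R0 P0 by (intro divide_nonneg_pos add_nonneg_nonneg mult_nonneg_nonneg) auto
      thus ?thesis using P0 unfolding K_def by linarith
    qed
    have target: "1 / c2 * real n powr (2 * (\<alpha> - 1) / \<alpha>) \<le> 1 / K"
    proof -
      have "1 / c2 * real n powr (2 * (\<alpha> - 1) / \<alpha>) \<le> Q / c2" using Qn c2 by (simp add: divide_right_mono)
      also have "Q / c2 \<le> 1 / K" using KQ K0 c2 Q0 by (simp add: field_simps mult.commute)
      finally show ?thesis .
    qed
    have gL2: "g i \<in> L2 \<alpha>" for i unfolding g_def by (rule indicator_L2[OF a1])
    define S where "S = {(f, h). (f, h) \<in> graphL \<alpha> \<and>
                         integral\<^sup>L (mu \<alpha>) (\<lambda>x. (f x)^2) \<noteq> 0 \<and>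
                         (\<forall>i<n. integral\<^sup>L (mu \<alpha>) (\<lambda>x. f x * g i x) = 0)}"
    have "ereal (1 / c2 * real n powr (2 * (\<alpha> - 1) / \<alpha>)) \<le>
          (INF fh \<in> S. ereal (integral\<^sup>L (mu \<alpha>) (\<lambda>x. fst fh x * (- snd fh x))
                 / integral\<^sup>L (mu \<alpha>) (\<lambda>x. (fst fh x)^2)))"
    proof (rule INF_greatest)
      fix fh assume "fh \<in> S"
      then obtain f h where fh: "fh = (f, h)" and gr: "(f, h) \<in> graphL \<alpha>"
        and Nn: "integral\<^sup>L (mu \<alpha>) (\<lambda>x. (f x)^2) \<noteq> 0"
        and orth0: "\<And>i. i < n \<Longrightarrow> integral\<^sup>L (mu \<alpha>) (\<lambda>x. f x * g i x) = 0"
        unfolding S_def by blast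
      define N where "N = integral\<^sup>L (mu \<alpha>) (\<lambda>x. (f x)^2)"
      define Qf where "Qf = integral\<^sup>L (mu \<alpha>) (\<lambda>x. f x * h x)"
      have fL: "f \<in> L2 \<alpha>" and hL: "h \<in> L2 \<alpha>" using gr unfolding graphL_def by auto
      have fm: "f \<in> borel_measurable borel" and hm: "h \<in> borel_measurable borel"
        and fi: "integrable (mu \<alpha>) (\<lambda>x. (f x)^2)" and hi: "integrable (mu \<alpha>) (\<lambda>x. (h x)^2)"
        using fL hL by (auto simp: L2_def)
      have Z: "Zc \<alpha> > 0"
      proof (rule ccontr)
        assume "\<not> Zc \<alpha> > 0"
        hence "exp (- V \<alpha> x) / Zc \<alpha> \<le> 0" for x by (intro divide_nonneg_nonpos) auto
        hence "dens \<alpha> x = 0" for x unfolding dens_def by (rule max_absorb1)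
        hence "N = 0" unfolding N_def using integral_mu[OF a1, of "\<lambda>x. (f x)^2"] fm by simp
        thus False using Nn N_def by simp
      qed
      have iF: "((\<lambda>x. (f x)^2 * rho \<alpha> x) has_integral (Zc \<alpha> * N)) UNIV"
        unfolding N_def by (rule mu_HK[OF a1 Z _ fi]) (use fm in simp)
      have iH: "((\<lambda>x. (h x)^2 * rho \<alpha> x) has_integral (Zc \<alpha> * integral\<^sup>L (mu \<alpha>) (\<lambda>x. (h x)^2))) UNIV"
        by (rule mu_HK[OF a1 Z _ hi]) (use hm in simp)
      have iFH: "((\<lambda>x. f x * (h x * rho \<alpha> x)) has_integral (Zc \<alpha> * Qf)) UNIV"
      proof -
        have "((\<lambda>x. f x * h x * rho \<alpha> x) has_integral (Zc \<alpha> * Qf)) UNIV"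
          unfolding Qf_def by (rule mu_HK[OF a1 Z _ L2_prod[OF a1 fL hL]]) (use fm hm in simp)
        thus ?thesis by (simp add: mult.assoc)
      qed
      have orth: "((\<lambda>t. f t * rho \<alpha> t) has_integral 0)
                 {- R + real j * (2 * R / n) .. - R + real (Suc j) * (2 * R / n)}" if j: "j < n" for j
      proof -
        have gm: "g j \<in> borel_measurable borel" using gL2[of j] by (simp add: L2_def)
        have "((\<lambda>x. f x * g j x * rho \<alpha> x) has_integral (Zc \<alpha> * 0)) UNIV"
          using mu_HK[OF a1 Z _ L2_prod[OF a1 fL gL2[of j]]] orth0[OF j] fm gm by simp
        moreover have "(\<lambda>x. f x * g j x * rho \<alpha> x) =
            (\<lambda>x. if x \<in> {- R + real j * l .. - R + real (Suc j) * l} then f x * rho \<alpha> x else 0)"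
          by (auto simp: fun_eq_iff g_def indicator_def)
        ultimately have "((\<lambda>x. if x \<in> {- R + real j * l .. - R + real (Suc j) * l} then f x * rho \<alpha> x else 0)
             has_integral 0) UNIV" by simp
        thus ?thesis unfolding has_integral_restrict_UNIV l_def .
      qed
      have core_ineq: "Zc \<alpha> * N \<le> K * (- (Zc \<alpha> * Qf))"
        unfolding K_def
        by (rule core[OF a2 gr n R0 E0 C(2) _ C(3) _ C(4) orth iF iH iFH])
           (use R0 a2 in auto)
      have NK: "N \<le> K * (- Qf)"
      proof -
        have "Zc \<alpha> * N \<le> Zc \<alpha> * (K * (- Qf))" using core_ineq by (simp add: algebra_simps)
        thus ?thesis using Z by (rule mult_left_le_imp_le)
      qed
      have N0: "N > 0"
      proof -
        have "N \<ge> 0" unfolding N_def by (rule Bochner_Integration.integral_nonneg) simp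
        moreover have "N \<noteq> 0" using Nn N_def by simp
        ultimately show ?thesis by linarith
      qed
      have feq: "(\<lambda>x. f x * (- h x)) = (\<lambda>x. - (f x * h x))" by simp
      have num: "integral\<^sup>L (mu \<alpha>) (\<lambda>x. f x * (- h x)) = - Qf"
        unfolding Qf_def feq by (rule Bochner_Integration.integral_minus)
      have "N / K \<le> - Qf" using NK K0 by (subst pos_divide_le_eq) (auto simp: mult_ac)
      hence "(N / K) / N \<le> - Qf / N" using N0 by (intro divide_right_mono) auto
      moreover have "(N / K) / N = 1 / K" using N0 by simp
      ultimately have "1 / K \<le> - Qf / N" by simp
      hence "1 / c2 * real n powr (2 * (\<alpha> - 1) / \<alpha>) \<le> - Qf / N" using target by linarith
      thus "ereal (1 / c2 * real n powr (2 * (\<alpha> - 1) / \<alpha>)) \<le>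
            ereal (integral\<^sup>L (mu \<alpha>) (\<lambda>x. fst fh x * (- snd fh x)) / integral\<^sup>L (mu \<alpha>) (\<lambda>x. (fst fh x)^2))"
        unfolding fh fst_conv snd_conv num N_def[symmetric] ereal_less_eq .
    qed
    also have "\<dots> \<le> lambdaL \<alpha> n"
      unfolding lambdaL_def S_def by (rule SUP_upper[of g]) (use gL2 in auto)
    finally show "lambdaL \<alpha> n \<ge> ereal (1 / c2 * real n powr (2 * (\<alpha> - 1) / \<alpha>))" .
  qed
qed


end
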